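(* In every psi-calculus: let $B\subseteq\mathcal N$ be finite with $B\#P$, let $\Psi\rhd P\xrightarrow{\alpha}P'$ with $\alpha\neq\tau$, and let $\mathcal F(P)=(\nu\tilde b_P)\Psi_P$ with $\tilde b_P\#\Psi,P,\mathrm{subj}(\alpha),B$. Then there exists a term $M$ such that $B\#M$ and $\Psi\otimes\Psi_P\vdash M\leftrightarrow\mathrm{subj}(\alpha)$.
   Context: Names: a countably infinite set $\mathcal N$ of atomic names. A nominal set is a set equipped with name swapping operations $(a\;b)\cdot X$ satisfying the usual axioms; the support $\mathrm n(X)$ of an element is the set of names affected by swappings, assumed finite; $a \# X$ ("$a$ fresh for $X$") means $a\notin \mathrm n(X)$, and $A\#X$ for a set/sequence $A$ means every element of $A$ is fresh for $X$. A function/relation is equivariant if it commutes with all swappings. $\tilde a$ denotes a finite sequence of names (also used as the set of its elements). Psi-calculus: given by three nominal datatypes $\mathbf T$ (terms, ranged over by $M,N,K,L$), $\mathbf C$ (conditions, $\varphi$), $\mathbf A$ (assertions, $\Psi$), equivariant operators $\leftrightarrow:\mathbf T\times\mathbf T\to\mathbf C$ (channel equivalence), $\otimes:\mathbf A\times\mathbf A\to\mathbf A$ (composition), $\mathbf 1\in\mathbf A$ (unit), $\vdash\subseteq\mathbf A\times\mathbf C$ (entailment), and equivariant substitution functions $X[\tilde a:=\tilde T]$ (substituting terms for distinct names) on $\mathbf T,\mathbf C,\mathbf A$ satisfying: (S1) if $\tilde a\subseteq\mathrm n(X)$ and $b\in\mathrm n(\tilde T)$ then $b\in\mathrm n(X[\tilde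 a:=\tilde T])$; (S2) if $\tilde b\# X,\tilde a$ then $X[\tilde a:=\tilde T]=((\tilde b\;\tilde a)\cdot X)[\tilde b:=\tilde T]$. Assertions are equivalent, $\Psi\simeq\Psi'$, if for all $\varphi$: $\Psi\vdash\varphi\iff\Psi'\vdash\varphi$. Required: $\Psi\vdash M\leftrightarrow N\Rightarrow\Psi\vdash N\leftrightarrow M$; $\Psi\vdash M\leftrightarrow N\wedge\Psi\vdash N\leftrightarrow L\Rightarrow\Psi\vdash M\leftrightarrow L$; $\Psi\simeq\Psi'\Rightarrow\Psi\otimes\Psi''\simeq\Psi'\otimes\Psi''$; $\Psi\otimes\mathbf 1\simeq\Psi$; $(\Psi\otimes\Psi')\otimes\Psi''\simeq\Psi\otimes(\Psi'\otimes\Psi'')$; $\Psi\otimes\Psi'\simeq\Psi'\otimes\Psi$. Frames: $(\nu\tilde b)\Psi$ with $\tilde b$ binding into $\Psi$, identified up to alpha-equivalence; $(\nu\tilde b_1)\Psi_1\otimes(\nu\tilde b_2)\Psi_2=(\nu\tilde b_1\tilde b_2)(\Psi_1\otimes\Psi_2)$ with $\tilde b_1\#\tilde b_2,\Psi_2$ and $\tilde b_2\#\tilde b_1,\Psi_1$. Agents: $\mathbf 0$; $\overline M N.P$ (output); $\underline M(\lambda\tilde x)N.P$ (input, $\tilde x\subseteq\mathrm n(N)$ without duplicates, binding in $N$ and $P$); $\mathbf{case}\ \varphi_1:P_1\,[\!]\cdots[\!]\,\varphi_n:P_n$; $(\nu a)P$ (binds $a$); $P\mid Q$; $!P$; $(\!|\Psi|\!)$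 (assertion). Agents are identified up to alpha-equivalence. In $!P$ and in each branch $P_i$ of a case, every assertion must occur under an input or output prefix. Substitution on agents is defined homomorphically, avoiding capture. Frame of an agent: $\mathcal F(\mathbf 0)=\mathcal F(\text{input})=\mathcal F(\text{output})=\mathcal F(\mathbf{case}\ldots)=\mathcal F(!P)=\mathbf 1$, $\mathcal F((\!|\Psi|\!))=\Psi$, $\mathcal F(P\mid Q)=\mathcal F(P)\otimes\mathcal F(Q)$, $\mathcal F((\nu b)P)=(\nu b)\mathcal F(P)$. Actions: output $\overline M(\nu\tilde a)N$ with $\tilde a\subseteq\mathrm n(N)$, input $\underline M N$, and $\tau$; $\mathrm{subj}(\overline M(\nu\tilde a)N)=\mathrm{subj}(\underline MN)=M$; $\mathrm{bn}(\overline M(\nu\tilde a)N)=\tilde a$, otherwise $\emptyset$; $\mathrm n(\tau)=\emptyset$, else $\mathrm n(M)\cup\mathrm n(N)$. Transitions $\Psi\rhd P\xrightarrow{\alpha}P'$ are the least relation closed under (symmetric versions of Com and Par included): In: $\Psi\vdash M\leftrightarrow K$ implies $\Psi\rhd\underline M(\lambda\tilde y)N.P\xrightarrow{\underline K\,N[\tilde y:=\tilde L]}P[\tilde y:=\tilde L]$ for any $\tilde L$. Out: $\Psi\vdash M\leftrightarrow K$ implies $\Psi\rhd\overline MN.P\xrightarrow{\overline KN}P$. Case: $\Psi\rhd P_i\xrightarrow\alpha P'$ and $\Psi\vdash\varphi_i$ imply $\Psi\rhd\mathbf{case}\ \tilde\varphi:\tilde P\xrightarrow\alpha P'$. Com: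 with $\mathcal F(P)=(\nu\tilde b_P)\Psi_P$, $\mathcal F(Q)=(\nu\tilde b_Q)\Psi_Q$, $\tilde b_P\#\Psi,\tilde b_Q,Q,M,P$, $\tilde b_Q\#\Psi,\tilde b_P,P,K,Q$: if $\Psi_Q\otimes\Psi\rhd P\xrightarrow{\overline M(\nu\tilde a)N}P'$, $\Psi_P\otimes\Psi\rhd Q\xrightarrow{\underline KN}Q'$, $\Psi\otimes\Psi_P\otimes\Psi_Q\vdash M\leftrightarrow K$ and $\tilde a\#Q$, then $\Psi\rhd P\mid Q\xrightarrow\tau(\nu\tilde a)(P'\mid Q')$. Par: with $\mathcal F(Q)=(\nu\tilde b_Q)\Psi_Q$, $\tilde b_Q\#\Psi,P,\alpha$: if $\Psi_Q\otimes\Psi\rhd P\xrightarrow\alpha P'$ and $\mathrm{bn}(\alpha)\#Q$ then $\Psi\rhd P\mid Q\xrightarrow\alpha P'\mid Q$. Scope: $\Psi\rhd P\xrightarrow\alpha P'$, $b\#\alpha,\Psi$ imply $\Psi\rhd(\nu b)P\xrightarrow\alpha(\nu b)P'$. Open: $\Psi\rhd P\xrightarrow{\overline M(\nu\tilde a)N}P'$, $b\#\tilde a,\Psi,M$, $b\in\mathrm n(N)$ imply $\Psi\rhd(\nu b)P\xrightarrow{\overline M(\nu\tilde a\cup\{b\})N}P'$. Rep: $\Psi\rhd P\mid !P\xrightarrow\alpha P'$ implies $\Psi\rhd !P\xrightarrow\alpha P'$. $\mathrm{bn}(\alpha)$ binds into the object and derivative; transitions are identified up to alpha-equivalence. *)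

theory Defs
  imports Main
begin

section \<open>Names and nominal sets (swapping presentation)\<close>

type_synonym name = nat

definition nswap :: "name \<Rightarrow> name \<Rightarrow> name \<Rightarrow> name" where
  "nswap a b c = (if c = a then b else if c = b then a else c)"

definition supp_of :: "(name \<Rightarrow> name \<Rightarrow> 'x \<Rightarrow> 'x) \<Rightarrow> 'x \<Rightarrow> name set" where
  "supp_of p x = {a. infinite {b. p a b x \<noteq> x}}"

definition nominal :: "(name \<Rightarrow> name \<Rightarrow> 'x \<Rightarrow> 'x) \<Rightarrow> bool" where
  "nominal p \<longleftrightarrow>
     (\<forall>a x. p a a x = x) \<and>
     (\<forall>a b x. p a b (p a b x) = x) \<and>
     (\<forall>a b c d x. p a b (p c d x) = p (nswap a b c) (nswap a b d) (p a b x)) \<and>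
     (\<forall>x. finite (supp_of p x))"

text \<open>Simultaneous swapping (b1 a1)...(bn an) given as a list of pairs.\<close>
fun perm_list :: "(name \<Rightarrow> name \<Rightarrow> 'x \<Rightarrow> 'x) \<Rightarrow> (name \<times> name) list \<Rightarrow> 'x \<Rightarrow> 'x" where
  "perm_list p [] x = x"
| "perm_list p ((a, b) # ps) x = p a b (perm_list p ps x)"

section \<open>Psi-calculus parameters\<close>

record ('t, 'c, 'a) psi =
  permT :: "name \<Rightarrow> name \<Rightarrow> 't \<Rightarrow> 't"
  permC :: "name \<Rightarrow> name \<Rightarrow> 'c \<Rightarrow> 'c"
  permA :: "name \<Rightarrow> name \<Rightarrow> 'a \<Rightarrow> 'a"
  chan_eq :: "'t \<Rightarrow> 't \<Rightarrow> 'c"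
  acomp :: "'a \<Rightarrow> 'a \<Rightarrow> 'a"
  aunit :: "'a"
  entails :: "'a \<Rightarrow> 'c \<Rightarrow> bool"
  substT :: "'t \<Rightarrow> name list \<Rightarrow> 't list \<Rightarrow> 't"
  substC :: "'c \<Rightarrow> name list \<Rightarrow> 't list \<Rightarrow> 'c"
  substA :: "'a \<Rightarrow> name list \<Rightarrow> 't list \<Rightarrow> 'a"

definition suppT :: "('t, 'c, 'a, 'z) psi_scheme \<Rightarrow> 't \<Rightarrow> name set" where
  "suppT C = supp_of (permT C)"
definition suppC :: "('t, 'c, 'a, 'z) psi_scheme \<Rightarrow> 'c \<Rightarrow> name set" where
  "suppC C = supp_of (permC C)"
definition suppA :: "('t, 'c, 'a, 'z) psi_scheme \<Rightarrow> 'a \<Rightarrow> name set" where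
  "suppA C = supp_of (permA C)"

definition suppTs :: "('t, 'c, 'a, 'z) psi_scheme \<Rightarrow> 't list \<Rightarrow> name set" where
  "suppTs C Ts = (\<Union>T\<in>set Ts. suppT C T)"

definition assert_equiv :: "('t, 'c, 'a, 'z) psi_scheme \<Rightarrow> 'a \<Rightarrow> 'a \<Rightarrow> bool" where
  "assert_equiv C \<Psi> \<Psi>' \<longleftrightarrow> (\<forall>\<phi>. entails C \<Psi> \<phi> = entails C \<Psi>' \<phi>)"

text \<open>Substitution axioms (S1), (S2) and equivariance, for one nominal datatype.\<close>
definition subst_ok ::
  "(name \<Rightarrow> name \<Rightarrow> 't \<Rightarrow> 't) \<Rightarrow> (name \<Rightarrow> name \<Rightarrow> 'x \<Rightarrow> 'x) \<Rightarrow> ('x \<Rightarrow> name list \<Rightarrow> 't list \<Rightarrow> 'x) \<Rightarrow> bool" where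
  "subst_ok pt px sb \<longleftrightarrow>
     (\<forall>a b X xs Ts. px a b (sb X xs Ts) = sb (px a b X) (map (nswap a b) xs) (map (pt a b) Ts)) \<and>
     (\<forall>X xs Ts b. distinct xs \<and> length xs = length Ts \<and> set xs \<subseteq> supp_of px X \<and>
          b \<in> (\<Union>T\<in>set Ts. supp_of pt T) \<longrightarrow> b \<in> supp_of px (sb X xs Ts)) \<and>
     (\<forall>X xs Ts bs. distinct xs \<and> length xs = length Ts \<and> distinct bs \<and> length bs = length xs \<and>
          set bs \<inter> (supp_of px X \<union> set xs) = {} \<longrightarrow>
          sb X xs Ts = sb (perm_list px (zip bs xs) X) bs Ts)"

definition psi_calculus :: "('t, 'c, 'a, 'z) psi_scheme \<Rightarrow> bool" where
  "psi_calculus C \<longleftrightarrow>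
     nominal (permT C) \<and> nominal (permC C) \<and> nominal (permA C) \<and>
     \<comment> \<open>equivariance of the operators\<close>
     (\<forall>a b M N. permC C a b (chan_eq C M N) = chan_eq C (permT C a b M) (permT C a b N)) \<and>
     (\<forall>a b \<Psi> \<Psi>'. permA C a b (acomp C \<Psi> \<Psi>') = acomp C (permA C a b \<Psi>) (permA C a b \<Psi>')) \<and>
     (\<forall>a b. permA C a b (aunit C) = aunit C) \<and>
     (\<forall>a b \<Psi> \<phi>. entails C \<Psi> \<phi> = entails C (permA C a b \<Psi>) (permC C a b \<phi>)) \<and>
     subst_ok (permT C) (permT C) (substT C) \<and>
     subst_ok (permT C) (permC C) (substC C) \<and>
     subst_ok (permT C) (permA C) (substA C) \<and>
     \<comment> \<open>requirements on channel equivalence and composition\<close>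
     (\<forall>\<Psi> M N. entails C \<Psi> (chan_eq C M N) \<longrightarrow> entails C \<Psi> (chan_eq C N M)) \<and>
     (\<forall>\<Psi> M N L. entails C \<Psi> (chan_eq C M N) \<and> entails C \<Psi> (chan_eq C N L) \<longrightarrow>
         entails C \<Psi> (chan_eq C M L)) \<and>
     (\<forall>\<Psi> \<Psi>' \<Psi>''. assert_equiv C \<Psi> \<Psi>' \<longrightarrow>
         assert_equiv C (acomp C \<Psi> \<Psi>'') (acomp C \<Psi>' \<Psi>'')) \<and>
     (\<forall>\<Psi>. assert_equiv C (acomp C \<Psi> (aunit C)) \<Psi>) \<and>
     (\<forall>\<Psi> \<Psi>' \<Psi>''. assert_equiv C (acomp C (acomp C \<Psi> \<Psi>') \<Psi>'')
         (acomp C \<Psi> (acomp C \<Psi>' \<Psi>''))) \<and>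
     (\<forall>\<Psi> \<Psi>'. assert_equiv C (acomp C \<Psi> \<Psi>') (acomp C \<Psi>' \<Psi>))"

section \<open>Agents (raw syntax; identified up to alpha-equivalence below)\<close>

datatype ('t, 'c, 'a) agent =
    PNil
  | Outp 't 't "('t, 'c, 'a) agent"
  | Inp 't "name list" 't "('t, 'c, 'a) agent"   \<comment> \<open>\<open>M(\<lambda>xs)N.P\<close>, xs binds in N and P\<close>
  | PCase "('c \<times> ('t, 'c, 'a) agent) list"
  | Res name "('t, 'c, 'a) agent"                 \<comment> \<open>\<open>(\<nu>a)P\<close>, a binds in P\<close>
  | Par "('t, 'c, 'a) agent" "('t, 'c, 'a) agent"
  | Bang "('t, 'c, 'a) agent"
  | Assert 'a

fun perm_agent :: "('t, 'c, 'a, 'z) psi_scheme \<Rightarrow> name \<Rightarrow> name \<Rightarrow> ('t, 'c, 'a) agent \<Rightarrow> ('t, 'c, 'a) agent" where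
  "perm_agent C a b PNil = PNil"
| "perm_agent C a b (Outp M N P) = Outp (permT C a b M) (permT C a b N) (perm_agent C a b P)"
| "perm_agent C a b (Inp M xs N P) =
     Inp (permT C a b M) (map (nswap a b) xs) (permT C a b N) (perm_agent C a b P)"
| "perm_agent C a b (PCase cs) = PCase (map (\<lambda>(\<phi>, P). (permC C a b \<phi>, perm_agent C a b P)) cs)"
| "perm_agent C a b (Res x P) = Res (nswap a b x) (perm_agent C a b P)"
| "perm_agent C a b (Par P Q) = Par (perm_agent C a b P) (perm_agent C a b Q)"
| "perm_agent C a b (Bang P) = Bang (perm_agent C a b P)"
| "perm_agent C a b (Assert \<Psi>) = Assert (permA C a b \<Psi>)"

text \<open>Free names (support of the alpha-equivalence class).\<close>
fun fn :: "('t, 'c, 'a, 'z) psi_scheme \<Rightarrow> ('t, 'c, 'a) agent \<Rightarrow> name set" where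
  "fn C PNil = {}"
| "fn C (Outp M N P) = suppT C M \<union> suppT C N \<union> fn C P"
| "fn C (Inp M xs N P) = suppT C M \<union> ((suppT C N \<union> fn C P) - set xs)"
| "fn C (PCase cs) = (\<Union>(\<phi>, P)\<in>set cs. suppC C \<phi> \<union> fn C P)"
| "fn C (Res x P) = fn C P - {x}"
| "fn C (Par P Q) = fn C P \<union> fn C Q"
| "fn C (Bang P) = fn C P"
| "fn C (Assert \<Psi>) = suppA C \<Psi>"

fun guarded :: "('t, 'c, 'a) agent \<Rightarrow> bool" where
  "guarded PNil = True"
| "guarded (Outp M N P) = True"
| "guarded (Inp M xs N P) = True"
| "guarded (PCase cs) = (\<forall>(\<phi>, P)\<in>set cs. guarded P)"
| "guarded (Res x P) = guarded P"
| "guarded (Par P Q) = (guarded P \<and> guarded Q)"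
| "guarded (Bang P) = guarded P"
| "guarded (Assert \<Psi>) = False"

fun wf_agent :: "('t, 'c, 'a, 'z) psi_scheme \<Rightarrow> ('t, 'c, 'a) agent \<Rightarrow> bool" where
  "wf_agent C PNil = True"
| "wf_agent C (Outp M N P) = wf_agent C P"
| "wf_agent C (Inp M xs N P) = (distinct xs \<and> set xs \<subseteq> suppT C N \<and> wf_agent C P)"
| "wf_agent C (PCase cs) = (\<forall>(\<phi>, P)\<in>set cs. guarded P \<and> wf_agent C P)"
| "wf_agent C (Res x P) = wf_agent C P"
| "wf_agent C (Par P Q) = (wf_agent C P \<and> wf_agent C Q)"
| "wf_agent C (Bang P) = (guarded P \<and> wf_agent C P)"
| "wf_agent C (Assert \<Psi>) = True"

lemma list_all2_case_prod_mono [mono]: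
  "(\<And>a b c d. P a b c d \<longrightarrow> Q a b c d) \<Longrightarrow>
   list_all2 (\<lambda>(a, b) (c, d). P a b c d) xs ys \<longrightarrow> list_all2 (\<lambda>(a, b) (c, d). Q a b c d) xs ys"
  by (auto elim!: list_all2_mono)

inductive alpha :: "('t, 'c, 'a, 'z) psi_scheme \<Rightarrow> ('t, 'c, 'a) agent \<Rightarrow> ('t, 'c, 'a) agent \<Rightarrow> bool"
  for C where
  "alpha C PNil PNil"
| "alpha C P Q \<Longrightarrow> alpha C (Outp M N P) (Outp M N Q)"
| "length ys = length xs \<Longrightarrow> length cs = length xs \<Longrightarrow> distinct cs \<Longrightarrow>
   set cs \<inter> (set xs \<union> set ys \<union> fn C (Inp M xs N P) \<union> fn C (Inp M ys N' Q)) = {} \<Longrightarrow>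
   perm_list (permT C) (zip cs xs) N = perm_list (permT C) (zip cs ys) N' \<Longrightarrow>
   alpha C (perm_list (perm_agent C) (zip cs xs) P) (perm_list (perm_agent C) (zip cs ys) Q) \<Longrightarrow>
   alpha C (Inp M xs N P) (Inp M ys N' Q)"
| "list_all2 (\<lambda>(\<phi>, P) (\<phi>', Q). \<phi> = \<phi>' \<and> alpha C P Q) cs ds \<Longrightarrow> alpha C (PCase cs) (PCase ds)"
| "c \<notin> {a, b} \<union> fn C (Res a P) \<union> fn C (Res b Q) \<Longrightarrow>
   alpha C (perm_agent C a c P) (perm_agent C b c Q) \<Longrightarrow> alpha C (Res a P) (Res b Q)"
| "alpha C P P' \<Longrightarrow> alpha C Q Q' \<Longrightarrow> alpha C (Par P Q) (Par P' Q')"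
| "alpha C P Q \<Longrightarrow> alpha C (Bang P) (Bang Q)"
| "alpha C (Assert \<Psi>) (Assert \<Psi>)"

text \<open>Capture-avoiding simultaneous substitution on agents, as a relation up to alpha.\<close>
inductive subst_agent :: "('t, 'c, 'a, 'z) psi_scheme \<Rightarrow> ('t, 'c, 'a) agent \<Rightarrow> name list \<Rightarrow> 't list \<Rightarrow>
    ('t, 'c, 'a) agent \<Rightarrow> bool" for C where
  "subst_agent C PNil ys Ls PNil"
| "subst_agent C P ys Ls P' \<Longrightarrow>
   subst_agent C (Outp M N P) ys Ls (Outp (substT C M ys Ls) (substT C N ys Ls) P')"
| "set xs \<inter> (set ys \<union> suppTs C Ls) = {} \<Longrightarrow> subst_agent C P ys Ls P' \<Longrightarrow>
   subst_agent C (Inp M xs N P) ys Ls (Inp (substT C M ys Ls) xs (substT C N ys Ls) P')"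
| "list_all2 (\<lambda>(\<phi>, P) (\<phi>', P'). \<phi>' = substC C \<phi> ys Ls \<and> subst_agent C P ys Ls P') cs ds \<Longrightarrow>
   subst_agent C (PCase cs) ys Ls (PCase ds)"
| "x \<notin> set ys \<union> suppTs C Ls \<Longrightarrow> subst_agent C P ys Ls P' \<Longrightarrow>
   subst_agent C (Res x P) ys Ls (Res x P')"
| "subst_agent C P ys Ls P' \<Longrightarrow> subst_agent C Q ys Ls Q' \<Longrightarrow>
   subst_agent C (Par P Q) ys Ls (Par P' Q')"
| "subst_agent C P ys Ls P' \<Longrightarrow> subst_agent C (Bang P) ys Ls (Bang P')"
| "subst_agent C (Assert \<Psi>) ys Ls (Assert (substA C \<Psi> ys Ls))"
| "alpha C P P1 \<Longrightarrow> subst_agent C P1 ys Ls Q1 \<Longrightarrow> alpha C Q1 Q \<Longrightarrow> subst_agent C P ys Ls Q"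

section \<open>Frames\<close>

text \<open>A frame \<open>(\<nu>bs)\<Psi>\<close> is represented by the pair (bs, \<Psi>); bs binds (nested, left to right) in \<Psi>.\<close>
definition frame_fn :: "('t, 'c, 'a, 'z) psi_scheme \<Rightarrow> name list \<times> 'a \<Rightarrow> name set" where
  "frame_fn C F = suppA C (snd F) - set (fst F)"

inductive frame_alpha :: "('t, 'c, 'a, 'z) psi_scheme \<Rightarrow> name list \<times> 'a \<Rightarrow> name list \<times> 'a \<Rightarrow> bool"
  for C where
  "frame_alpha C ([], \<Psi>) ([], \<Psi>)"
| "c \<notin> {a, b} \<union> frame_fn C (a # as, \<Psi>) \<union> frame_fn C (b # bs, \<Psi>') \<Longrightarrow>
   frame_alpha C (map (nswap a c) as, permA C a c \<Psi>) (map (nswap b c) bs, permA C b c \<Psi>') \<Longrightarrow>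
   frame_alpha C (a # as, \<Psi>) (b # bs, \<Psi>')"

text \<open>\<open>has_frame C P bs \<Psi>\<close>: the frame \<open>\<F>(P)\<close> equals \<open>(\<nu>bs)\<Psi>\<close> (up to alpha).\<close>
inductive has_frame :: "('t, 'c, 'a, 'z) psi_scheme \<Rightarrow> ('t, 'c, 'a) agent \<Rightarrow> name list \<Rightarrow> 'a \<Rightarrow> bool"
  for C where
  "has_frame C PNil [] (aunit C)"
| "has_frame C (Outp M N P) [] (aunit C)"
| "has_frame C (Inp M xs N P) [] (aunit C)"
| "has_frame C (PCase cs) [] (aunit C)"
| "has_frame C (Bang P) [] (aunit C)"
| "has_frame C (Assert \<Psi>) [] \<Psi>"
| "has_frame C P bP \<Psi>P \<Longrightarrow> has_frame C Q bQ \<Psi>Q \<Longrightarrow>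
   set bP \<inter> (set bQ \<union> suppA C \<Psi>Q) = {} \<Longrightarrow> set bQ \<inter> (set bP \<union> suppA C \<Psi>P) = {} \<Longrightarrow>
   has_frame C (Par P Q) (bP @ bQ) (acomp C \<Psi>P \<Psi>Q)"
| "has_frame C P bs \<Psi> \<Longrightarrow> has_frame C (Res b P) (b # bs) \<Psi>"
| "has_frame C P bs \<Psi> \<Longrightarrow> frame_alpha C (bs, \<Psi>) (bs', \<Psi>') \<Longrightarrow> has_frame C P bs' \<Psi>'"

section \<open>Actions and transitions\<close>

datatype 't action =
    OutAct 't "name list" 't   \<comment> \<open>\<open>\<bar>M(\<nu>as)N\<close>; as binds into N and the derivative\<close>
  | InAct 't 't
  | Tau

fun subj :: "'t action \<Rightarrow> 't" where
  "subj (OutAct M as N) = M"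
| "subj (InAct M N) = M"

fun bn :: "'t action \<Rightarrow> name list" where
  "bn (OutAct M as N) = as"
| "bn (InAct M N) = []"
| "bn Tau = []"

fun names_act :: "('t, 'c, 'a, 'z) psi_scheme \<Rightarrow> 't action \<Rightarrow> name set" where
  "names_act C (OutAct M as N) = suppT C M \<union> suppT C N"
| "names_act C (InAct M N) = suppT C M \<union> suppT C N"
| "names_act C Tau = {}"

fun res_chain :: "name list \<Rightarrow> ('t, 'c, 'a) agent \<Rightarrow> ('t, 'c, 'a) agent" where
  "res_chain [] P = P"
| "res_chain (a # as) P = Res a (res_chain as P)"

definition bres_fn :: "('t, 'c, 'a, 'z) psi_scheme \<Rightarrow> name list \<times> 't \<times> ('t, 'c, 'a) agent \<Rightarrow> name set" where
  "bres_fn C R = (case R of (as, N, P) \<Rightarrow> (suppT C N \<union> fn C P) - set as)"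

inductive bres_alpha :: "('t, 'c, 'a, 'z) psi_scheme \<Rightarrow> name list \<times> 't \<times> ('t, 'c, 'a) agent \<Rightarrow>
    name list \<times> 't \<times> ('t, 'c, 'a) agent \<Rightarrow> bool" for C where
  "alpha C P Q \<Longrightarrow> bres_alpha C ([], N, P) ([], N, Q)"
| "c \<notin> {a, b} \<union> bres_fn C (a # as, N, P) \<union> bres_fn C (b # bs, N', Q) \<Longrightarrow>
   bres_alpha C (map (nswap a c) as, permT C a c N, perm_agent C a c P)
                (map (nswap b c) bs, permT C b c N', perm_agent C b c Q) \<Longrightarrow>
   bres_alpha C (a # as, N, P) (b # bs, N', Q)"

fun res_alpha :: "('t, 'c, 'a, 'z) psi_scheme \<Rightarrow> 't action \<times> ('t, 'c, 'a) agent \<Rightarrow>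
    't action \<times> ('t, 'c, 'a) agent \<Rightarrow> bool" where
  "res_alpha C (OutAct M as N, P) (OutAct M' bs N', Q) = (M = M' \<and> bres_alpha C (as, N, P) (bs, N', Q))"
| "res_alpha C (InAct M N, P) (InAct M' N', Q) = (M = M' \<and> N = N' \<and> alpha C P Q)"
| "res_alpha C (Tau, P) (Tau, Q) = alpha C P Q"
| "res_alpha C _ _ = False"

inductive transition :: "('t, 'c, 'a, 'z) psi_scheme \<Rightarrow> 'a \<Rightarrow> ('t, 'c, 'a) agent \<Rightarrow> 't action \<Rightarrow>
    ('t, 'c, 'a) agent \<Rightarrow> bool" for C where
  In: "entails C \<Psi> (chan_eq C M K) \<Longrightarrow> length Ls = length ys \<Longrightarrow> subst_agent C P ys Ls P' \<Longrightarrow>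
   transition C \<Psi> (Inp M ys N P) (InAct K (substT C N ys Ls)) P'"
| Out: "entails C \<Psi> (chan_eq C M K) \<Longrightarrow> transition C \<Psi> (Outp M N P) (OutAct K [] N) P"
| Case: "(\<phi>, P) \<in> set cs \<Longrightarrow> transition C \<Psi> P \<alpha> P' \<Longrightarrow> entails C \<Psi> \<phi> \<Longrightarrow> transition C \<Psi> (PCase cs) \<alpha> P'"
| Com1: "has_frame C P bP \<Psi>P \<Longrightarrow> has_frame C Q bQ \<Psi>Q \<Longrightarrow>
   set bP \<inter> (suppA C \<Psi> \<union> set bQ \<union> fn C Q \<union> suppT C M \<union> fn C P) = {} \<Longrightarrow>
   set bQ \<inter> (suppA C \<Psi> \<union> set bP \<union> fn C P \<union> suppT C K \<union> fn C Q) = {} \<Longrightarrow>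
   transition C (acomp C \<Psi>Q \<Psi>) P (OutAct M as N) P' \<Longrightarrow>
   transition C (acomp C \<Psi>P \<Psi>) Q (InAct K N) Q' \<Longrightarrow>
   entails C (acomp C (acomp C \<Psi> \<Psi>P) \<Psi>Q) (chan_eq C M K) \<Longrightarrow>
   set as \<inter> fn C Q = {} \<Longrightarrow>
   transition C \<Psi> (Par P Q) Tau (res_chain as (Par P' Q'))"
| Com2: "has_frame C P bP \<Psi>P \<Longrightarrow> has_frame C Q bQ \<Psi>Q \<Longrightarrow>
   set bQ \<inter> (suppA C \<Psi> \<union> set bP \<union> fn C P \<union> suppT C M \<union> fn C Q) = {} \<Longrightarrow>
   set bP \<inter> (suppA C \<Psi> \<union> set bQ \<union> fn C Q \<union> suppT C K \<union> fn C P) = {} \<Longrightarrow>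
   transition C (acomp C \<Psi>P \<Psi>) Q (OutAct M as N) Q' \<Longrightarrow>
   transition C (acomp C \<Psi>Q \<Psi>) P (InAct K N) P' \<Longrightarrow>
   entails C (acomp C (acomp C \<Psi> \<Psi>Q) \<Psi>P) (chan_eq C M K) \<Longrightarrow>
   set as \<inter> fn C P = {} \<Longrightarrow>
   transition C \<Psi> (Par P Q) Tau (res_chain as (Par P' Q'))"
| Par1: "has_frame C Q bQ \<Psi>Q \<Longrightarrow> set bQ \<inter> (suppA C \<Psi> \<union> fn C P \<union> names_act C \<alpha>) = {} \<Longrightarrow>
   transition C (acomp C \<Psi>Q \<Psi>) P \<alpha> P' \<Longrightarrow> set (bn \<alpha>) \<inter> fn C Q = {} \<Longrightarrow>
   transition C \<Psi> (Par P Q) \<alpha> (Par P' Q)"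
| Par2: "has_frame C P bP \<Psi>P \<Longrightarrow> set bP \<inter> (suppA C \<Psi> \<union> fn C Q \<union> names_act C \<alpha>) = {} \<Longrightarrow>
   transition C (acomp C \<Psi>P \<Psi>) Q \<alpha> Q' \<Longrightarrow> set (bn \<alpha>) \<inter> fn C P = {} \<Longrightarrow>
   transition C \<Psi> (Par P Q) \<alpha> (Par P Q')"
| Scope: "transition C \<Psi> P \<alpha> P' \<Longrightarrow> b \<notin> names_act C \<alpha> \<union> suppA C \<Psi> \<Longrightarrow>
   transition C \<Psi> (Res b P) \<alpha> (Res b P')"
| Open: "transition C \<Psi> P (OutAct M (as1 @ as2) N) P' \<Longrightarrow>
   b \<notin> set as1 \<union> set as2 \<union> suppA C \<Psi> \<union> suppT C M \<Longrightarrow> b \<in> suppT C N \<Longrightarrow>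
   transition C \<Psi> (Res b P) (OutAct M (as1 @ b # as2) N) P'"
| Rep: "transition C \<Psi> (Par P (Bang P)) \<alpha> P' \<Longrightarrow> transition C \<Psi> (Bang P) \<alpha> P'"
| Alpha: "alpha C P P1 \<Longrightarrow> transition C \<Psi> P1 \<alpha>1 P1' \<Longrightarrow> res_alpha C (\<alpha>1, P1') (\<alpha>, P') \<Longrightarrow>
   transition C \<Psi> P \<alpha> P'"

end

theory Submission
  imports Defs
begin

section \<open>Nominal basics\<close>

lemma nswap_nswap[simp]: "nswap a b (nswap a b n) = n"
  by (auto simp: nswap_def)

lemma nswap_same[simp]: "n \<noteq> a \<Longrightarrow> n \<noteq> b \<Longrightarrow> nswap a b n = n"
  by (auto simp: nswap_def)

lemma nswap_a[simp]: "nswap a b a = b" and nswap_b[simp]: "nswap a b b = a"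
  by (auto simp: nswap_def)

lemma nswap_inj: "(nswap a b x = nswap a b y) = (x = y)"
  by (metis nswap_nswap)

lemma nswap_sym: "nswap a b = nswap b a"
  by (auto simp: nswap_def fun_eq_iff)

lemma nswap_comp: "nswap x y (nswap a c n) = nswap (nswap x y a) (nswap x y c) (nswap x y n)"
  by (auto simp: nswap_def)

lemma nswap_image_inter: "nswap a b ` X \<inter> nswap a b ` Y = nswap a b ` (X \<inter> Y)"
  by (auto simp: nswap_inj)

lemma nswap_image_diff: "nswap a b ` X - nswap a b ` Y = nswap a b ` (X - Y)"
  by (auto simp: nswap_inj)

lemma mem_nswap_image: "(d \<in> nswap a b ` S) = (nswap a b d \<in> S)"
  by (metis image_iff nswap_nswap)

lemma nswap_in_image: "(nswap a b x \<in> nswap a b ` X) = (x \<in> X)"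
  by (auto simp: nswap_inj)

lemma inj_nswap: "inj (nswap a b)"
  by (simp add: inj_def nswap_inj)

lemma nswap_image_eq_iff: "(nswap a b ` X = nswap a b ` Y) = (X = Y)"
  by (simp add: inj_image_eq_iff inj_nswap)

lemma nswap_image_empty: "(nswap a b ` X = {}) = (X = {})" by simp

lemma nswap_image_id: "a \<notin> X \<Longrightarrow> b \<notin> X \<Longrightarrow> nswap a b ` X = X"
  by (force simp: nswap_def)

lemma finite_nswap_image[simp]: "finite (nswap a b ` X) = finite X"
  by (rule finite_image_iff) (meson inj_nswap inj_on_subset subset_UNIV)

lemma fresh_name_exists: "finite (X :: name set) \<Longrightarrow> \<exists>d. d \<notin> X"
  by (meson ex_new_if_finite infinite_UNIV_nat)

lemma obtain_fresh: "finite (X :: name set) \<Longrightarrow> (\<And>d. d \<notin> X \<Longrightarrow> thesis) \<Longrightarrow> thesis"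
  using fresh_name_exists by blast

context
  fixes p :: "name \<Rightarrow> name \<Rightarrow> 'x \<Rightarrow> 'x"
  assumes nom: "nominal p"
begin

lemma nom_id[simp]: "p a a x = x" using nom by (simp add: nominal_def)
lemma nom_inv[simp]: "p a b (p a b x) = x" using nom by (simp add: nominal_def)
lemma nom_comp: "p a b (p c d x) = p (nswap a b c) (nswap a b d) (p a b x)"
  using nom by (simp add: nominal_def)
lemma nom_fin[simp]: "finite (supp_of p x)" using nom by (simp add: nominal_def)

lemma nom_sym: "p a b x = p b a x"
proof -
  have "\<And>y. p a b (p a b y) = p b a (p a b y)"
    using nom_comp[of a b a b] by simp
  then have "p a b (p a b (p a b x)) = p b a (p a b (p a b x))" .
  then show ?thesis by simp
qed

lemma nom_inj: "(p a b x = p a b y) = (x = y)"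
  by (metis nom_inv)

lemma nom_fresh: assumes "a \<notin> supp_of p x" "b \<notin> supp_of p x" shows "p a b x = x"
proof (cases "a = b")
  case True then show ?thesis by simp
next
  case False
  have f1: "finite {c. p a c x \<noteq> x}" using assms(1) by (simp add: supp_of_def)
  have f2: "finite {c. p b c x \<noteq> x}" using assms(2) by (simp add: supp_of_def)
  have "finite ({c. p a c x \<noteq> x} \<union> {c. p b c x \<noteq> x} \<union> {a, b})" using f1 f2 by simp
  then obtain c where c: "c \<notin> {c. p a c x \<noteq> x} \<union> {c. p b c x \<noteq> x} \<union> {a, b}"
    by (rule obtain_fresh)
  then have ca: "p a c x = x" and cb: "p b c x = x" and ca': "c \<noteq> a" and cb': "c \<noteq> b" by auto
  have "p a c (p b c (p a c x)) = p (nswap a c b) (nswap a c c) (p a c (p a c x))"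
    by (rule nom_comp)
  also have "\<dots> = p b a x" using ca' cb' False by simp
  finally have "p b a x = x" using ca cb by simp
  then show ?thesis by (metis nom_sym)
qed

lemma nom_supp_swap: "supp_of p (p a b x) = nswap a b ` supp_of p x"
proof -
  have key: "\<And>e d. p e d (p a b x) = p a b (p (nswap a b e) (nswap a b d) x)"
    using nom_comp[of a b] by simp
  have "\<And>e. {d. p e d (p a b x) \<noteq> p a b x} = nswap a b ` {d. p (nswap a b e) d x \<noteq> x}"
    by (rule set_eqI) (simp add: key nom_inj mem_nswap_image)
  then have "\<And>e. e \<in> supp_of p (p a b x) \<longleftrightarrow> nswap a b e \<in> supp_of p x"
    by (simp add: supp_of_def)
  then show ?thesis
    by (simp add: set_eq_iff mem_nswap_image)
qed

lemma nom_fresh_swap_in: "a \<notin> supp_of p x \<Longrightarrow> b \<notin> supp_of p x \<Longrightarrow> c \<notin> supp_of p (p a b x) \<longleftrightarrow> c \<notin> supp_of p x"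
  by (simp add: nom_fresh)

lemma nom_comm_swap: "a \<notin> {x, y} \<Longrightarrow> c \<notin> {x, y} \<Longrightarrow> p a c (p x y X) = p x y (p a c X)"
  using nom_comp[of a c x y X] by simp

end

lemma supp_bin_le:
  assumes "\<forall>a b x y. p3 a b (f x y) = f (p1 a b x) (p2 a b y)"
  shows "supp_of p3 (f x y) \<subseteq> supp_of p1 x \<union> supp_of p2 y"
proof
  fix a assume a: "a \<in> supp_of p3 (f x y)"
  show "a \<in> supp_of p1 x \<union> supp_of p2 y"
  proof (rule ccontr)
    assume "a \<notin> supp_of p1 x \<union> supp_of p2 y"
    then have "finite ({b. p1 a b x \<noteq> x} \<union> {b. p2 a b y \<noteq> y})" by (simp add: supp_of_def)
    moreover have "{b. p3 a b (f x y) \<noteq> f x y} \<subseteq> {b. p1 a b x \<noteq> x} \<union> {b. p2 a b y \<noteq> y}"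
      using assms by auto
    ultimately have "finite {b. p3 a b (f x y) \<noteq> f x y}" by (rule finite_subset[rotated])
    then show False using a by (simp add: supp_of_def)
  qed
qed

lemma supp_const: "\<forall>a b. p a b k = k \<Longrightarrow> supp_of p k = {}"
  by (simp add: supp_of_def)



section \<open>Psi basics\<close>

definition PropF :: "('t, 'c, 'a, 'z) psi_scheme \<Rightarrow> 'a \<Rightarrow> 't \<Rightarrow> name set \<Rightarrow> 'a \<Rightarrow> bool" where
  "PropF C \<Psi> K B A \<longleftrightarrow> (\<exists>M. suppT C M \<inter> B = {} \<and> entails C (acomp C \<Psi> A) (chan_eq C M K))"

definition EN :: "('t, 'c, 'a, 'z) psi_scheme \<Rightarrow> 'a \<Rightarrow> 't \<Rightarrow> name set \<Rightarrow> name set" where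
  "EN C \<Psi> K B = suppA C \<Psi> \<union> suppT C K \<union> B"

locale psi =
  fixes C :: "('t, 'c, 'a, 'z) psi_scheme"
  assumes psi: "psi_calculus C"
begin

lemma nomT: "nominal (permT C)" using psi by (simp add: psi_calculus_def)
lemma nomC: "nominal (permC C)" using psi by (simp add: psi_calculus_def)
lemma nomA: "nominal (permA C)" using psi by (simp add: psi_calculus_def)

lemma eqv_chan: "permC C a b (chan_eq C M N) = chan_eq C (permT C a b M) (permT C a b N)"
  using psi by (simp add: psi_calculus_def)
lemma eqv_comp: "permA C a b (acomp C X Y) = acomp C (permA C a b X) (permA C a b Y)"
  using psi by (simp add: psi_calculus_def)
lemma eqv_unit[simp]: "permA C a b (aunit C) = aunit C"
  using psi by (simp add: psi_calculus_def)
lemma eqv_ent: "entails C \<Psi> \<phi> = entails C (permA C a b \<Psi>) (permC C a b \<phi>)"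
  using psi unfolding psi_calculus_def by blast
lemma chan_sym: "entails C \<Psi> (chan_eq C M N) \<Longrightarrow> entails C \<Psi> (chan_eq C N M)"
  using psi unfolding psi_calculus_def by blast
lemma ae_congr: "assert_equiv C X Y \<Longrightarrow> assert_equiv C (acomp C X Z) (acomp C Y Z)"
  using psi unfolding psi_calculus_def by blast
lemma ae_unit: "assert_equiv C (acomp C X (aunit C)) X"
  using psi unfolding psi_calculus_def by blast
lemma ae_assoc: "assert_equiv C (acomp C (acomp C X Y) Z) (acomp C X (acomp C Y Z))"
  using psi unfolding psi_calculus_def by blast
lemma ae_comm: "assert_equiv C (acomp C X Y) (acomp C Y X)"
  using psi unfolding psi_calculus_def by blast

lemma ae_refl: "assert_equiv C X X" by (simp add: assert_equiv_def)
lemma ae_sym: "assert_equiv C X Y \<Longrightarrow> assert_equiv C Y X" by (simp add: assert_equiv_def)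
lemma ae_trans: "assert_equiv C X Y \<Longrightarrow> assert_equiv C Y Z \<Longrightarrow> assert_equiv C X Z"
  by (simp add: assert_equiv_def)
lemma ae_ent: "assert_equiv C X Y \<Longrightarrow> entails C X \<phi> \<Longrightarrow> entails C Y \<phi>"
  by (simp add: assert_equiv_def)
lemma ae_congr_r: "assert_equiv C Y Z \<Longrightarrow> assert_equiv C (acomp C X Y) (acomp C X Z)"
  by (meson ae_comm ae_congr ae_trans)

lemmas permT_inv[simp] = nom_inv[OF nomT]
lemmas permC_inv[simp] = nom_inv[OF nomC]
lemmas permA_inv[simp] = nom_inv[OF nomA]
lemmas permT_id[simp] = nom_id[OF nomT]
lemmas permA_id[simp] = nom_id[OF nomA]
lemmas permC_id[simp] = nom_id[OF nomC]
lemmas finite_suppT[simp] = nom_fin[OF nomT, folded suppT_def]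
lemmas finite_suppA[simp] = nom_fin[OF nomA, folded suppA_def]
lemmas finite_suppC[simp] = nom_fin[OF nomC, folded suppC_def]
lemmas suppT_swap = nom_supp_swap[OF nomT, folded suppT_def]
lemmas suppA_swap = nom_supp_swap[OF nomA, folded suppA_def]
lemmas suppC_swap = nom_supp_swap[OF nomC, folded suppC_def]
lemmas permT_fresh = nom_fresh[OF nomT, folded suppT_def]
lemmas permA_fresh = nom_fresh[OF nomA, folded suppA_def]
lemmas permC_fresh = nom_fresh[OF nomC, folded suppC_def]
lemmas permA_comp = nom_comp[OF nomA]
lemmas permT_comp = nom_comp[OF nomT]

lemma suppA_comp: "suppA C (acomp C X Y) \<subseteq> suppA C X \<union> suppA C Y"
  unfolding suppA_def by (rule supp_bin_le) (simp add: eqv_comp)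

lemma suppA_unit[simp]: "suppA C (aunit C) = {}"
  unfolding suppA_def by (rule supp_const) simp

lemma ae_swap_unit: "assert_equiv C X (aunit C) \<Longrightarrow> assert_equiv C (permA C a b X) (aunit C)"
  unfolding assert_equiv_def
proof
  fix \<phi> assume h: "\<forall>\<phi>. entails C X \<phi> = entails C (aunit C) \<phi>"
  have "entails C (permA C a b X) \<phi> = entails C X (permC C a b \<phi>)"
    using eqv_ent[of "permA C a b X" "\<phi>" a b] by simp
  also have "\<dots> = entails C (aunit C) (permC C a b \<phi>)" using h by simp
  also have "\<dots> = entails C (aunit C) \<phi>"
    using eqv_ent[of "aunit C" "permC C a b \<phi>" a b] by simp
  finally show "entails C (permA C a b X) \<phi> = entails C (aunit C) \<phi>" .
qed

lemma EN_finite: "finite B \<Longrightarrow> finite (EN C \<Psi> K B)"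
  by (simp add: EN_def)

lemma PropF_ae: "assert_equiv C A A' \<Longrightarrow> PropF C \<Psi> K B A \<Longrightarrow> PropF C \<Psi> K B A'"
  unfolding PropF_def by (meson ae_congr_r ae_ent)

lemma PropF_assoc1: "PropF C \<Psi> K B (acomp C A1 A2) = PropF C (acomp C \<Psi> A2) K B A1"
proof -
  have "assert_equiv C (acomp C \<Psi> (acomp C A1 A2)) (acomp C (acomp C \<Psi> A2) A1)"
    by (meson ae_assoc ae_comm ae_congr_r ae_sym ae_trans)
  then show ?thesis unfolding PropF_def by (meson ae_ent ae_sym)
qed

lemma PropF_assoc2: "PropF C \<Psi> K B (acomp C A1 A2) = PropF C (acomp C \<Psi> A1) K B A2"
proof -
  have "assert_equiv C (acomp C \<Psi> (acomp C A1 A2)) (acomp C (acomp C \<Psi> A1) A2)"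
    by (meson ae_assoc ae_sym)
  then show ?thesis unfolding PropF_def by (meson ae_ent ae_sym)
qed

lemma ent_swap: "entails C X \<phi> \<Longrightarrow> entails C (permA C a b X) (permC C a b \<phi>)"
  using eqv_ent by blast

lemma PropF_eqv: "PropF C \<Psi> K B A \<Longrightarrow>
   PropF C (permA C x y \<Psi>) (permT C x y K) (nswap x y ` B) (permA C x y A)"
  unfolding PropF_def
proof (elim exE conjE)
  fix M assume m: "suppT C M \<inter> B = {}" and e: "entails C (acomp C \<Psi> A) (chan_eq C M K)"
  have "suppT C (permT C x y M) \<inter> nswap x y ` B = {}"
    using m by (simp add: suppT_swap nswap_image_inter)
  moreover have "entails C (acomp C (permA C x y \<Psi>) (permA C x y A)) (chan_eq C (permT C x y M) (permT C x y K))"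
    using ent_swap[OF e, of x y] by (simp add: eqv_comp eqv_chan)
  ultimately show "\<exists>M. suppT C M \<inter> nswap x y ` B = {} \<and>
    entails C (acomp C (permA C x y \<Psi>) (permA C x y A)) (chan_eq C M (permT C x y K))" by blast
qed

lemma PropF_eqv_iff: "PropF C \<Psi> K B A =
   PropF C (permA C x y \<Psi>) (permT C x y K) (nswap x y ` B) (permA C x y A)"
  using PropF_eqv[of "permA C x y \<Psi>" "permT C x y K" "nswap x y ` B" "permA C x y A" x y] PropF_eqv
  by (auto simp: image_image)

lemma EN_swap: "EN C (permA C x y \<Psi>) (permT C x y K) (nswap x y ` B) = nswap x y ` EN C \<Psi> K B"
  by (simp add: EN_def suppA_swap suppT_swap image_Un)

lemma RNM_aux:
  "\<And>\<Psi> K B. card (Z \<inter> EN C \<Psi> K B) = n \<Longrightarrow> finite Z \<Longrightarrow> finite W \<Longrightarrow> finite B \<Longrightarrow>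
   EN C \<Psi> K B \<inter> W = {} \<Longrightarrow>
   (\<forall>z \<in> Z \<inter> EN C \<Psi> K B. z \<notin> suppA C A1 \<and> z \<notin> suppA C A2) \<Longrightarrow>
   \<exists>\<Psi>' K' B'. finite B' \<and> EN C \<Psi>' K' B' \<inter> (Z \<union> W) = {} \<and>
     (PropF C \<Psi> K B A1 = PropF C \<Psi>' K' B' A1) \<and> (PropF C \<Psi> K B A2 = PropF C \<Psi>' K' B' A2)"
proof (induction n)
  case 0
  then have "Z \<inter> EN C \<Psi> K B = {}" using EN_finite by (metis card_0_eq finite_Int)
  then show ?case using 0 by blast
next
  case (Suc n)
  then obtain z where z: "z \<in> Z \<inter> EN C \<Psi> K B" by (metis card.empty empty_iff nat.distinct(1) subsetI subset_antisym)
  obtain d where d: "d \<notin> suppA C A1 \<union> suppA C A2 \<union> Z \<union> W \<union> EN C \<Psi> K B"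
    using Suc.prems EN_finite by (metis finite_Un finite_suppA obtain_fresh)
  let ?\<Psi> = "permA C z d \<Psi>" and ?K = "permT C z d K" and ?B = "nswap z d ` B"
  have zA: "z \<notin> suppA C A1" "z \<notin> suppA C A2" using z Suc.prems by auto
  have fix1: "permA C z d A1 = A1" and fix2: "permA C z d A2 = A2"
    using zA d by (auto intro: permA_fresh)
  have P1: "PropF C \<Psi> K B A1 = PropF C ?\<Psi> ?K ?B A1"
    using PropF_eqv_iff[of \<Psi> K B A1 z d] fix1 by simp
  have P2: "PropF C \<Psi> K B A2 = PropF C ?\<Psi> ?K ?B A2"
    using PropF_eqv_iff[of \<Psi> K B A2 z d] fix2 by simp
  have ENe: "EN C ?\<Psi> ?K ?B = nswap z d ` EN C \<Psi> K B" by (rule EN_swap)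
  have dEN: "d \<notin> EN C \<Psi> K B" using d by auto
  have zd: "z \<noteq> d" using z d by auto
  have ENe2: "EN C ?\<Psi> ?K ?B = insert d (EN C \<Psi> K B - {z})"
    unfolding ENe using z dEN zd by (auto simp: nswap_def image_iff)
  have "Z \<inter> EN C ?\<Psi> ?K ?B = (Z \<inter> EN C \<Psi> K B) - {z}"
    unfolding ENe2 using d by auto
  then have card: "card (Z \<inter> EN C ?\<Psi> ?K ?B) = n"
    using Suc.prems z by (simp add: card_Diff_singleton)
  have W: "EN C ?\<Psi> ?K ?B \<inter> W = {}" unfolding ENe2 using d Suc.prems by auto
  have cond: "\<forall>z' \<in> Z \<inter> EN C ?\<Psi> ?K ?B. z' \<notin> suppA C A1 \<and> z' \<notin> suppA C A2"
    unfolding ENe2 using d Suc.prems by auto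
  have fB: "finite ?B" using Suc.prems by simp
  from Suc.IH[OF card Suc.prems(2,3) fB W cond] P1 P2 show ?case by metis
qed

lemma RNM:
  assumes "finite Z" "finite W" "finite B" "EN C \<Psi> K B \<inter> W = {}"
    "\<forall>z \<in> Z \<inter> EN C \<Psi> K B. z \<notin> suppA C A1 \<and> z \<notin> suppA C A2"
  shows "\<exists>\<Psi>' K' B'. finite B' \<and> EN C \<Psi>' K' B' \<inter> (Z \<union> W) = {} \<and>
     (PropF C \<Psi> K B A1 = PropF C \<Psi>' K' B' A1) \<and> (PropF C \<Psi> K B A2 = PropF C \<Psi>' K' B' A2)"
  using RNM_aux[OF refl assms] .

end

section \<open>Frame alpha-equivalence\<close>

lemma swap_set_sub: "nswap a c ` S = nswap b c ` S' \<Longrightarrow> c \<noteq> a \<Longrightarrow> c \<noteq> b \<Longrightarrow>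
   c \<notin> S - {a} \<Longrightarrow> c \<notin> S' - {b} \<Longrightarrow> S - {a} \<subseteq> S' - {b}"
proof
  fix x assume h: "nswap a c ` S = nswap b c ` S'" "c \<noteq> a" "c \<noteq> b" "c \<notin> S - {a}"
    "c \<notin> S' - {b}" and x: "x \<in> S - {a}"
  then have xc: "x \<noteq> c" by auto
  then have "nswap a c x = x" using x by auto
  then have "x \<in> nswap b c ` S'" using h(1) x by (metis DiffD1 image_eqI)
  then have xs: "nswap b c x \<in> S'" by (simp add: mem_nswap_image)
  show "x \<in> S' - {b}"
  proof (cases "x = b")
    case True then show ?thesis using xs h by simp
  next
    case False then show ?thesis using xs xc by simp
  qed
qed

lemma swap_set_eq: assumes "nswap a c ` S = nswap b c ` S'" "c \<noteq> a" "c \<noteq> b"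
   "c \<notin> S - {a}" "c \<notin> S' - {b}" shows "S - {a} = S' - {b}"
proof (rule subset_antisym)
  show "S - {a} \<subseteq> S' - {b}" using assms by (rule swap_set_sub)
  show "S' - {b} \<subseteq> S - {a}" using assms(1)[symmetric] assms(3,2,5,4) by (rule swap_set_sub)
qed

lemma disj_swap_image: "a \<notin> E \<Longrightarrow> c \<notin> E \<Longrightarrow> E \<inter> X = {} \<Longrightarrow> E \<inter> nswap a c ` X = {}"
  by (auto simp: nswap_def split: if_splits)

context psi
begin

lemma frame_fn_simp: "frame_fn C (bs, \<Psi>) = suppA C \<Psi> - set bs"
  by (simp add: frame_fn_def)

lemma frame_fn_swap: "frame_fn C (map (nswap x y) bs, permA C x y \<Psi>) = nswap x y ` frame_fn C (bs, \<Psi>)"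
  by (simp add: frame_fn_def suppA_swap nswap_image_diff)

lemma FA_refl_aux: "\<forall>bs \<Psi>. length bs = n \<longrightarrow> frame_alpha C (bs, \<Psi>) (bs, \<Psi>)"
proof (induction n)
  case 0 then show ?case by (simp add: frame_alpha.intros)
next
  case (Suc n)
  show ?case
  proof (intro allI impI)
    fix bs :: "name list" and \<Psi> assume l: "length bs = Suc n"
    then obtain a as where bs: "bs = a # as" by (cases bs) auto
    have "finite ({a} \<union> suppA C \<Psi>)" by simp
    then obtain c where c: "c \<notin> {a} \<union> suppA C \<Psi>" by (rule obtain_fresh)
    have "frame_alpha C (map (nswap a c) as, permA C a c \<Psi>) (map (nswap a c) as, permA C a c \<Psi>)"
      using Suc.IH l bs by simp
    then show "frame_alpha C (bs, \<Psi>) (bs, \<Psi>)" unfolding bs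
      by (intro frame_alpha.intros(2)[where c=c]) (use c in \<open>auto simp: frame_fn_def\<close>)
  qed
qed

lemma FA_refl: "frame_alpha C (bs, \<Psi>) (bs, \<Psi>)"
  using FA_refl_aux by blast

lemma FA_sym: "frame_alpha C F G \<Longrightarrow> frame_alpha C G F"
proof (induction rule: frame_alpha.induct)
  case 1 then show ?case by (rule frame_alpha.intros)
next
  case (2 c a b as \<Psi> bs \<Psi>')
  show ?case by (rule frame_alpha.intros(2)[where c=c]) (use 2 in auto)
qed

lemma FA_ffn: "frame_alpha C F G \<Longrightarrow> frame_fn C F = frame_fn C G"
proof (induction rule: frame_alpha.induct)
  case 1 then show ?case by simp
next
  case (2 c a b as \<Psi> bs \<Psi>')
  have "nswap a c ` (suppA C \<Psi> - set as) = nswap b c ` (suppA C \<Psi>' - set bs)"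
    using 2(3) by (simp add: frame_fn_def suppA_swap nswap_image_diff)
  moreover have "c \<noteq> a" "c \<noteq> b" "c \<notin> (suppA C \<Psi> - set as) - {a}" "c \<notin> (suppA C \<Psi>' - set bs) - {b}"
    using 2(1) by (auto simp: frame_fn_def)
  ultimately have "(suppA C \<Psi> - set as) - {a} = (suppA C \<Psi>' - set bs) - {b}"
    by (rule swap_set_eq)
  then show ?case by (auto simp: frame_fn_def)
qed

lemma FA_ffn_star: "(frame_alpha C)\<^sup>*\<^sup>* F G \<Longrightarrow> frame_fn C F = frame_fn C G"
proof (induction rule: rtranclp_induct)
  case base then show ?case by simp
next
  case (step y z) then show ?case using FA_ffn[OF step(2)] by simp
qed

lemma FA_transfer:
  "frame_alpha C F G \<Longrightarrow> \<forall>\<Psi> K B. finite B \<longrightarrow> EN C \<Psi> K B \<inter> (set (fst F) \<union> set (fst G)) = {} \<longrightarrow>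
     PropF C \<Psi> K B (snd F) = PropF C \<Psi> K B (snd G)"
proof (induction rule: frame_alpha.induct)
  case 1 then show ?case by simp
next
  case (2 c a b as \<Psi>a bs \<Psi>b)
  have good: "PropF C \<Psi> K B \<Psi>a = PropF C \<Psi> K B \<Psi>b"
    if fB: "finite B" and E: "EN C \<Psi> K B \<inter> ({c} \<union> set (a # as) \<union> set (b # bs)) = {}" for \<Psi> K B
  proof -
    have ac: "a \<notin> EN C \<Psi> K B" "c \<notin> EN C \<Psi> K B" "b \<notin> EN C \<Psi> K B" using E by auto
    have fixa: "permA C a c \<Psi> = \<Psi>" "permT C a c K = K" "nswap a c ` B = B"
      using ac by (auto simp: EN_def intro!: permA_fresh permT_fresh nswap_image_id)
    have fixb: "permA C b c \<Psi> = \<Psi>" "permT C b c K = K" "nswap b c ` B = B"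
      using ac by (auto simp: EN_def intro!: permA_fresh permT_fresh nswap_image_id)
    have 1: "PropF C \<Psi> K B \<Psi>a = PropF C \<Psi> K B (permA C a c \<Psi>a)"
      using PropF_eqv_iff[of \<Psi> K B \<Psi>a a c] fixa by simp
    have 3: "PropF C \<Psi> K B \<Psi>b = PropF C \<Psi> K B (permA C b c \<Psi>b)"
      using PropF_eqv_iff[of \<Psi> K B \<Psi>b b c] fixb by simp
    have "EN C \<Psi> K B \<inter> nswap a c ` set as = {}" "EN C \<Psi> K B \<inter> nswap b c ` set bs = {}"
      using E ac by (simp_all add: disj_swap_image Int_Un_distrib)
    then have 2: "PropF C \<Psi> K B (permA C a c \<Psi>a) = PropF C \<Psi> K B (permA C b c \<Psi>b)"
      using 2(3) fB by (simp add: Int_Un_distrib)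
    show ?thesis using 1 2 3 by simp
  qed
  show ?case
  proof (intro allI impI)
    fix \<Psi> K B assume fB: "finite B" and E: "EN C \<Psi> K B \<inter> (set (fst (a # as, \<Psi>a)) \<union> set (fst (b # bs, \<Psi>b))) = {}"
    have cnd: "\<forall>z \<in> {c} \<inter> EN C \<Psi> K B. z \<notin> suppA C \<Psi>a \<and> z \<notin> suppA C \<Psi>b"
      using E 2(1) by (auto simp: frame_fn_def)
    obtain \<Psi>' K' B' where "finite B'" "EN C \<Psi>' K' B' \<inter> ({c} \<union> (set (a # as) \<union> set (b # bs))) = {}"
      "PropF C \<Psi> K B \<Psi>a = PropF C \<Psi>' K' B' \<Psi>a" "PropF C \<Psi> K B \<Psi>b = PropF C \<Psi>' K' B' \<Psi>b"
      using RNM[of "{c}" "set (a # as) \<union> set (b # bs)" B \<Psi> K \<Psi>a \<Psi>b] fB E cnd by auto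
    then show "PropF C \<Psi> K B (snd (a # as, \<Psi>a)) = PropF C \<Psi> K B (snd (b # bs, \<Psi>b))"
      using good[of B' \<Psi>' K'] by (simp add: Un_assoc)
  qed
qed

lemma REN1_aux: "\<forall>bs \<Psi>. length bs = n \<longrightarrow> x \<in> set bs \<longrightarrow> d \<notin> suppA C \<Psi> \<longrightarrow> d \<notin> set bs \<longrightarrow>
   frame_alpha C (bs, \<Psi>) (map (nswap x d) bs, permA C x d \<Psi>)"
proof (induction n)
  case 0 then show ?case by simp
next
  case (Suc n)
  show ?case
  proof (intro allI impI)
    fix bs :: "name list" and \<Psi> assume l: "length bs = Suc n" and xb: "x \<in> set bs"
      and dP: "d \<notin> suppA C \<Psi>" and db: "d \<notin> set bs"
    then obtain a as where bs: "bs = a # as" by (cases bs) auto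
    have "finite ({a, x, d} \<union> suppA C \<Psi> \<union> set as)" by simp
    then obtain c where c: "c \<notin> {a, x, d} \<union> suppA C \<Psi> \<union> set as" by (rule obtain_fresh)
    have xd: "x \<noteq> d" using xb db by auto
    have cs: "c \<notin> suppA C (permA C x d \<Psi>)" using c xd by (auto simp: suppA_swap mem_nswap_image)
    show "frame_alpha C (bs, \<Psi>) (map (nswap x d) bs, permA C x d \<Psi>)"
    proof (cases "a = x")
      case True
      have m: "map (nswap d c \<circ> nswap x d) as = map (nswap x c) as"
        using db c xd bs by (auto simp: nswap_def)
      have p: "permA C d c (permA C x d \<Psi>) = permA C x c \<Psi>"
      proof -
        have "permA C d c (permA C x d \<Psi>) = permA C (nswap d c x) (nswap d c d) (permA C d c \<Psi>)"
          by (rule permA_comp)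
        also have "\<dots> = permA C x c (permA C d c \<Psi>)" using c xd by simp
        also have "\<dots> = permA C x c \<Psi>" using c dP by (simp add: permA_fresh)
        finally show ?thesis .
      qed
      have "frame_alpha C (x # as, \<Psi>) (d # map (nswap x d) as, permA C x d \<Psi>)"
        by (rule frame_alpha.intros(2)[where c=c]) (use c cs xd in \<open>auto simp: frame_fn_def m p intro: FA_refl\<close>)
      then show ?thesis using True bs by simp
    next
      case False
      have ad: "a \<noteq> d" using db bs by auto
      have xas: "x \<in> set as" using xb bs False by auto
      have m: "map (nswap a c \<circ> nswap x d) as = map (nswap x d \<circ> nswap a c) as"
        using db bs c xd ad False by (auto simp: nswap_def)
      have p: "permA C a c (permA C x d \<Psi>) = permA C x d (permA C a c \<Psi>)"
        using c ad False by (intro nom_comm_swap[OF nomA]) auto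
      have IH: "frame_alpha C (map (nswap a c) as, permA C a c \<Psi>)
         (map (nswap x d) (map (nswap a c) as), permA C x d (permA C a c \<Psi>))"
      proof -
        have "x \<in> set (map (nswap a c) as)" using xas c False by (auto simp: image_iff intro!: bexI[of _ x])
        moreover have "d \<notin> suppA C (permA C a c \<Psi>)" using dP c ad by (auto simp: suppA_swap mem_nswap_image)
        moreover have "d \<notin> set (map (nswap a c) as)" using db bs c ad by (auto simp: nswap_def)
        moreover have "length (map (nswap a c) as) = n" using l bs by simp
        ultimately show ?thesis using Suc.IH by blast
      qed
      have "frame_alpha C (a # as, \<Psi>) (a # map (nswap x d) as, permA C x d \<Psi>)"
        by (rule frame_alpha.intros(2)[where c=c]) (use c cs IH in \<open>auto simp: frame_fn_def m p\<close>)
      then show ?thesis using False ad bs by simp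
    qed
  qed
qed

lemma REN1: "x \<in> set bs \<Longrightarrow> d \<notin> suppA C \<Psi> \<Longrightarrow> d \<notin> set bs \<Longrightarrow>
   frame_alpha C (bs, \<Psi>) (map (nswap x d) bs, permA C x d \<Psi>)"
  using REN1_aux by blast

lemma FA_eqv: "frame_alpha C F G \<Longrightarrow>
  frame_alpha C (map (nswap x y) (fst F), permA C x y (snd F)) (map (nswap x y) (fst G), permA C x y (snd G))"
proof (induction rule: frame_alpha.induct)
  case 1 then show ?case by (simp add: frame_alpha.intros)
next
  case (2 c a b as \<Psi> bs \<Psi>')
  let ?c = "nswap x y c"
  have f1: "frame_fn C (nswap x y a # map (nswap x y) as, permA C x y \<Psi>) = nswap x y ` frame_fn C (a # as, \<Psi>)"
    using frame_fn_swap[of x y "a # as" \<Psi>] by simp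
  have f2: "frame_fn C (nswap x y b # map (nswap x y) bs, permA C x y \<Psi>') = nswap x y ` frame_fn C (b # bs, \<Psi>')"
    using frame_fn_swap[of x y "b # bs" \<Psi>'] by simp
  have side: "?c \<notin> {nswap x y a, nswap x y b} \<union> frame_fn C (nswap x y a # map (nswap x y) as, permA C x y \<Psi>)
      \<union> frame_fn C (nswap x y b # map (nswap x y) bs, permA C x y \<Psi>')"
    unfolding f1 f2 using 2(1) by (simp add: nswap_inj nswap_in_image)
  have e1: "map (nswap x y) (map (nswap a c) as) = map (nswap (nswap x y a) ?c) (map (nswap x y) as)"
    by (induct as) (simp_all only: list.map nswap_comp[of x y a c])
  have e2: "map (nswap x y) (map (nswap b c) bs) = map (nswap (nswap x y b) ?c) (map (nswap x y) bs)"
    by (induct bs) (simp_all only: list.map nswap_comp[of x y b c])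
  have e3: "permA C x y (permA C a c \<Psi>) = permA C (nswap x y a) ?c (permA C x y \<Psi>)"
    by (rule permA_comp)
  have e4: "permA C x y (permA C b c \<Psi>') = permA C (nswap x y b) ?c (permA C x y \<Psi>')"
    by (rule permA_comp)
  from 2(3) have "frame_alpha C (map (nswap x y) (map (nswap a c) as), permA C x y (permA C a c \<Psi>))
     (map (nswap x y) (map (nswap b c) bs), permA C x y (permA C b c \<Psi>'))"
    by (simp only: fst_conv snd_conv)
  then have inner: "frame_alpha C (map (nswap (nswap x y a) ?c) (map (nswap x y) as), permA C (nswap x y a) ?c (permA C x y \<Psi>))
     (map (nswap (nswap x y b) ?c) (map (nswap x y) bs), permA C (nswap x y b) ?c (permA C x y \<Psi>'))"
    unfolding e1 e2 e3 e4 .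
  show ?case
    by (simp only: fst_conv snd_conv list.map) (rule frame_alpha.intros(2)[OF side inner])
qed


section \<open>Frames of agents\<close>

lemma set_swap_in: "x \<in> S \<Longrightarrow> d \<notin> S \<Longrightarrow> nswap x d ` S = insert d (S - {x})"
  by (auto simp: nswap_def image_iff)

lemma HF_star: "(frame_alpha C)\<^sup>*\<^sup>* F G \<Longrightarrow> has_frame C P (fst F) (snd F) \<Longrightarrow> has_frame C P (fst G) (snd G)"
proof (induction rule: rtranclp_induct)
  case base then show ?case by simp
next
  case (step y z)
  then have "has_frame C P (fst y) (snd y)" by simp
  moreover have "frame_alpha C (fst y, snd y) (fst z, snd z)" using step(2) by simp
  ultimately show ?case by (rule has_frame.intros(9))
qed

lemma FA_star_sym: "(frame_alpha C)\<^sup>*\<^sup>* F G \<Longrightarrow> (frame_alpha C)\<^sup>*\<^sup>* G F"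
proof (induction rule: rtranclp_induct)
  case base then show ?case by simp
next
  case (step y z)
  then show ?case by (meson FA_sym converse_rtranclp_into_rtranclp)
qed

lemma FS: "has_frame C P bs \<Psi> \<Longrightarrow> suppA C \<Psi> - set bs \<subseteq> fn C P"
proof (induction rule: has_frame.induct)
  case (7 P bP \<Psi>P Q bQ \<Psi>Q)
  then show ?case using suppA_comp[of \<Psi>P \<Psi>Q] by auto
next
  case (8 P bs \<Psi> b)
  then show ?case by auto
next
  case (9 P bs \<Psi> bs' \<Psi>')
  then show ?case using FA_ffn[OF 9(2)] by (simp add: frame_fn_def)
qed auto

lemma FA_unit: "frame_alpha C F G \<Longrightarrow> assert_equiv C (snd F) (aunit C) \<Longrightarrow> assert_equiv C (snd G) (aunit C)"
proof (induction rule: frame_alpha.induct)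
  case 1 then show ?case by simp
next
  case (2 c a b as \<Psi> bs \<Psi>')
  then have "assert_equiv C (permA C b c \<Psi>') (aunit C)" using ae_swap_unit by simp
  then have "assert_equiv C (permA C b c (permA C b c \<Psi>')) (aunit C)" by (rule ae_swap_unit)
  then show ?case by simp
qed

lemma G1: "has_frame C P bs \<Psi> \<Longrightarrow> guarded P \<Longrightarrow> assert_equiv C \<Psi> (aunit C)"
proof (induction rule: has_frame.induct)
  case (7 P bP \<Psi>P Q bQ \<Psi>Q)
  then have a: "assert_equiv C \<Psi>P (aunit C)" "assert_equiv C \<Psi>Q (aunit C)" by auto
  have "assert_equiv C (acomp C \<Psi>P \<Psi>Q) (acomp C (aunit C) \<Psi>Q)" using a(1) by (rule ae_congr)
  moreover have "assert_equiv C (acomp C (aunit C) \<Psi>Q) \<Psi>Q" by (meson ae_comm ae_unit ae_trans)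
  ultimately show ?case using a(2) by (meson ae_trans)
next
  case (9 P bs \<Psi> bs' \<Psi>')
  then show ?case using FA_unit[OF 9(2)] by simp
qed (auto simp: ae_refl)

lemma FA_nil: "frame_alpha C F G \<Longrightarrow> fst F = [] \<Longrightarrow> G = F"
  by (induction rule: frame_alpha.induct) auto

lemma INV_triv: "has_frame C P bs \<Psi> \<Longrightarrow>
   (case P of PNil \<Rightarrow> True | Outp _ _ _ \<Rightarrow> True | Inp _ _ _ _ \<Rightarrow> True | PCase _ \<Rightarrow> True | Bang _ \<Rightarrow> True | _ \<Rightarrow> False)
   \<Longrightarrow> bs = [] \<and> \<Psi> = aunit C"
proof (induction rule: has_frame.induct)
  case (9 P bs \<Psi> bs' \<Psi>')
  then show ?case using FA_nil[OF 9(2)] by auto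
qed auto

lemma INV_Assert: "has_frame C P bs \<Psi> \<Longrightarrow> P = Assert \<Phi> \<Longrightarrow> bs = [] \<and> \<Psi> = \<Phi>"
proof (induction rule: has_frame.induct)
  case (9 P bs \<Psi> bs' \<Psi>')
  then show ?case using FA_nil[OF 9(2)] by auto
qed auto

lemma INV_Res: "has_frame C P bs \<Psi> \<Longrightarrow> P = Res b Q \<Longrightarrow>
   \<exists>bs0 \<Psi>0. has_frame C Q bs0 \<Psi>0 \<and> (frame_alpha C)\<^sup>*\<^sup>* (b # bs0, \<Psi>0) (bs, \<Psi>)"
proof (induction rule: has_frame.induct)
  case (8 P bs \<Psi> b)
  then show ?case by auto
next
  case (9 P bs \<Psi> bs' \<Psi>')
  then obtain bs0 \<Psi>0 where "has_frame C Q bs0 \<Psi>0" "(frame_alpha C)\<^sup>*\<^sup>* (b # bs0, \<Psi>0) (bs, \<Psi>)" by auto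
  then show ?case using 9(2) by (meson rtranclp.rtrancl_into_rtrancl)
qed auto

lemma INV_Par: "has_frame C X bs \<Psi> \<Longrightarrow> X = Par P Q \<Longrightarrow>
   \<exists>b1 \<Psi>1 b2 \<Psi>2. has_frame C P b1 \<Psi>1 \<and> has_frame C Q b2 \<Psi>2 \<and>
     set b1 \<inter> (set b2 \<union> suppA C \<Psi>2) = {} \<and> set b2 \<inter> (set b1 \<union> suppA C \<Psi>1) = {} \<and>
     (frame_alpha C)\<^sup>*\<^sup>* (b1 @ b2, acomp C \<Psi>1 \<Psi>2) (bs, \<Psi>)"
proof (induction rule: has_frame.induct)
  case (7 P bP \<Psi>P Q bQ \<Psi>Q)
  then show ?case by blast
next
  case (9 P' bs \<Psi> bs' \<Psi>')
  then obtain b1 \<Psi>1 b2 \<Psi>2 where "has_frame C P b1 \<Psi>1 \<and> has_frame C Q b2 \<Psi>2 \<and>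
     set b1 \<inter> (set b2 \<union> suppA C \<Psi>2) = {} \<and> set b2 \<inter> (set b1 \<union> suppA C \<Psi>1) = {} \<and>
     (frame_alpha C)\<^sup>*\<^sup>* (b1 @ b2, acomp C \<Psi>1 \<Psi>2) (bs, \<Psi>)" by blast
  then show ?case using 9(2) by (meson rtranclp.rtrancl_into_rtrancl)
qed auto

lemma HF_eqv: "has_frame C P bs \<Psi> \<Longrightarrow> has_frame C (perm_agent C x y P) (map (nswap x y) bs) (permA C x y \<Psi>)"
proof (induction rule: has_frame.induct)
  case (7 P bP \<Psi>P Q bQ \<Psi>Q)
  have c1: "set (map (nswap x y) bP) \<inter> (set (map (nswap x y) bQ) \<union> suppA C (permA C x y \<Psi>Q)) = {}"
    using 7(3) by (simp add: suppA_swap image_Un[symmetric] nswap_image_inter)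
  have c2: "set (map (nswap x y) bQ) \<inter> (set (map (nswap x y) bP) \<union> suppA C (permA C x y \<Psi>P)) = {}"
    using 7(4) by (simp add: suppA_swap image_Un[symmetric] nswap_image_inter)
  show ?case using has_frame.intros(7)[OF 7(5) 7(6) c1 c2] by (simp add: eqv_comp)
next
  case (9 P bs \<Psi> bs' \<Psi>')
  then show ?case using FA_eqv[OF 9(2), of x y] has_frame.intros(9) by simp
qed (auto intro: has_frame.intros)

lemma RENF_aux: "\<And>bs \<Psi>. card (set bs \<inter> Y) = n \<Longrightarrow> has_frame C P bs \<Psi> \<Longrightarrow> finite Y \<Longrightarrow>
  \<exists>bs' \<Psi>'. has_frame C P bs' \<Psi>' \<and> set bs' \<inter> Y = {} \<and> (frame_alpha C)\<^sup>*\<^sup>* (bs, \<Psi>) (bs', \<Psi>')"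
proof (induction n)
  case 0
  then show ?case by auto
next
  case (Suc n)
  then obtain x where x: "x \<in> set bs \<inter> Y" by (metis card.empty empty_iff nat.distinct(1) subsetI subset_antisym)
  have "finite (suppA C \<Psi> \<union> set bs \<union> Y)" using Suc.prems by simp
  then obtain d where d: "d \<notin> suppA C \<Psi> \<union> set bs \<union> Y" by (rule obtain_fresh)
  have fa: "frame_alpha C (bs, \<Psi>) (map (nswap x d) bs, permA C x d \<Psi>)"
    using x d by (intro REN1) auto
  have hf: "has_frame C P (map (nswap x d) bs) (permA C x d \<Psi>)"
    using has_frame.intros(9)[OF Suc.prems(2) fa] .
  have "set (map (nswap x d) bs) = insert d (set bs - {x})" using x d by (simp add: set_swap_in)
  then have "set (map (nswap x d) bs) \<inter> Y = (set bs \<inter> Y) - {x}" using d by auto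
  then have "card (set (map (nswap x d) bs) \<inter> Y) = n" using Suc.prems x by (simp add: card_Diff_singleton)
  from Suc.IH[OF this hf Suc.prems(3)] obtain bs' \<Psi>' where
    "has_frame C P bs' \<Psi>'" "set bs' \<inter> Y = {}" "(frame_alpha C)\<^sup>*\<^sup>* (map (nswap x d) bs, permA C x d \<Psi>) (bs', \<Psi>')"
    by blast
  then show ?case using fa by (meson converse_rtranclp_into_rtranclp)
qed

lemma RENF: "has_frame C P bs \<Psi> \<Longrightarrow> finite Y \<Longrightarrow>
  \<exists>bs' \<Psi>'. has_frame C P bs' \<Psi>' \<and> set bs' \<inter> Y = {} \<and> (frame_alpha C)\<^sup>*\<^sup>* (bs, \<Psi>) (bs', \<Psi>')"
  using RENF_aux by blast


lemma FA_prefix: "frame_alpha C (bs, \<Psi>) (bs', \<Psi>') \<Longrightarrow> frame_alpha C (b # bs, \<Psi>) (b # bs', \<Psi>')"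
proof -
  assume h: "frame_alpha C (bs, \<Psi>) (bs', \<Psi>')"
  have "finite ({b} \<union> suppA C \<Psi> \<union> suppA C \<Psi>')" by simp
  then obtain c where c: "c \<notin> {b} \<union> suppA C \<Psi> \<union> suppA C \<Psi>'" by (rule obtain_fresh)
  have "frame_alpha C (map (nswap b c) bs, permA C b c \<Psi>) (map (nswap b c) bs', permA C b c \<Psi>')"
    using FA_eqv[OF h, of b c] by simp
  then show ?thesis
    by (intro frame_alpha.intros(2)[where c=c]) (use c in \<open>auto simp: frame_fn_def\<close>)
qed

lemma FA_prefix_star: "(frame_alpha C)\<^sup>*\<^sup>* F G \<Longrightarrow> (frame_alpha C)\<^sup>*\<^sup>* (b # fst F, snd F) (b # fst G, snd G)"
proof (induction rule: rtranclp_induct)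
  case base then show ?case by simp
next
  case (step y z)
  have "frame_alpha C (b # fst y, snd y) (b # fst z, snd z)" using step(2) by (intro FA_prefix) simp
  then show ?case using step(3) by (meson rtranclp.rtrancl_into_rtrancl)
qed

lemma RENPar_aux: "\<And>b1 \<Psi>1 b2 \<Psi>2. card (set (b1 @ b2) \<inter> Y) = n \<Longrightarrow> has_frame C P1 b1 \<Psi>1 \<Longrightarrow> has_frame C Q b2 \<Psi>2 \<Longrightarrow>
   set b1 \<inter> (set b2 \<union> suppA C \<Psi>2) = {} \<Longrightarrow> set b2 \<inter> (set b1 \<union> suppA C \<Psi>1) = {} \<Longrightarrow> finite Y \<Longrightarrow>
   \<exists>e1 \<Theta>1 e2 \<Theta>2. has_frame C P1 e1 \<Theta>1 \<and> has_frame C Q e2 \<Theta>2 \<and>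
     set e1 \<inter> (set e2 \<union> suppA C \<Theta>2) = {} \<and> set e2 \<inter> (set e1 \<union> suppA C \<Theta>1) = {} \<and>
     set (e1 @ e2) \<inter> Y = {} \<and> (frame_alpha C)\<^sup>*\<^sup>* (b1 @ b2, acomp C \<Psi>1 \<Psi>2) (e1 @ e2, acomp C \<Theta>1 \<Theta>2)"
proof (induction n)
  case 0
  then have "set (b1 @ b2) \<inter> Y = {}" by simp
  then show ?case using 0 by blast
next
  case (Suc n)
  then obtain x where x: "x \<in> set (b1 @ b2) \<inter> Y" by (metis card.empty empty_iff nat.distinct(1) subsetI subset_antisym)
  have "finite (suppA C \<Psi>1 \<union> suppA C \<Psi>2 \<union> set b1 \<union> set b2 \<union> Y)" using Suc.prems by simp
  then obtain d where d: "d \<notin> suppA C \<Psi>1 \<union> suppA C \<Psi>2 \<union> set b1 \<union> set b2 \<union> Y" by (rule obtain_fresh)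
  have dc: "d \<notin> suppA C (acomp C \<Psi>1 \<Psi>2)" using d suppA_comp[of \<Psi>1 \<Psi>2] by auto
  have fa: "frame_alpha C (b1 @ b2, acomp C \<Psi>1 \<Psi>2) (map (nswap x d) (b1 @ b2), permA C x d (acomp C \<Psi>1 \<Psi>2))"
    using x d dc by (intro REN1) auto
  show ?case
  proof (cases "x \<in> set b1")
    case True
    have xb2: "x \<notin> set b2" "x \<notin> suppA C \<Psi>2" using True Suc.prems(4) by auto
    have m2: "map (nswap x d) b2 = b2" using xb2 d by (intro map_idI nswap_same) auto
    have p2: "permA C x d \<Psi>2 = \<Psi>2" using xb2 d by (intro permA_fresh) auto
    have tgt: "(map (nswap x d) (b1 @ b2), permA C x d (acomp C \<Psi>1 \<Psi>2)) = (map (nswap x d) b1 @ b2, acomp C (permA C x d \<Psi>1) \<Psi>2)"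
      using m2 p2 by (simp add: eqv_comp)
    have hf1: "has_frame C P1 (map (nswap x d) b1) (permA C x d \<Psi>1)"
      using has_frame.intros(9)[OF Suc.prems(2) REN1[of x b1 d \<Psi>1]] True d by auto
    have sb1: "set (map (nswap x d) b1) = insert d (set b1 - {x})" using True d by (simp add: set_swap_in)
    have c1: "set (map (nswap x d) b1) \<inter> (set b2 \<union> suppA C \<Psi>2) = {}" using sb1 Suc.prems(4) d by auto
    have c2: "set b2 \<inter> (set (map (nswap x d) b1) \<union> suppA C (permA C x d \<Psi>1)) = {}"
      using sb1 Suc.prems(5) d xb2 by (auto simp: suppA_swap nswap_def split: if_splits)
    have "set (map (nswap x d) b1 @ b2) \<inter> Y = (set (b1 @ b2) \<inter> Y) - {x}" using sb1 d xb2 by auto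
    then have cd: "card (set (map (nswap x d) b1 @ b2) \<inter> Y) = n" using Suc.prems x by (simp add: card_Diff_singleton)
    from Suc.IH[OF cd hf1 Suc.prems(3) c1 c2 Suc.prems(6)] show ?thesis
      using fa tgt by (metis (no_types, lifting) converse_rtranclp_into_rtranclp)
  next
    case False
    then have True: "x \<in> set b2" using x by auto
    have xb1: "x \<notin> set b1" "x \<notin> suppA C \<Psi>1" using True Suc.prems(5) by auto
    have m1: "map (nswap x d) b1 = b1" using xb1 d by (intro map_idI nswap_same) auto
    have p1: "permA C x d \<Psi>1 = \<Psi>1" using xb1 d by (intro permA_fresh) auto
    have tgt: "(map (nswap x d) (b1 @ b2), permA C x d (acomp C \<Psi>1 \<Psi>2)) = (b1 @ map (nswap x d) b2, acomp C \<Psi>1 (permA C x d \<Psi>2))"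
      using m1 p1 by (simp add: eqv_comp)
    have hf2: "has_frame C Q (map (nswap x d) b2) (permA C x d \<Psi>2)"
      using has_frame.intros(9)[OF Suc.prems(3) REN1[of x b2 d \<Psi>2]] True d by auto
    have sb2: "set (map (nswap x d) b2) = insert d (set b2 - {x})" using True d by (simp add: set_swap_in)
    have c2: "set (map (nswap x d) b2) \<inter> (set b1 \<union> suppA C \<Psi>1) = {}" using sb2 Suc.prems(5) d by auto
    have c1: "set b1 \<inter> (set (map (nswap x d) b2) \<union> suppA C (permA C x d \<Psi>2)) = {}"
      using sb2 Suc.prems(4) d xb1 by (auto simp: suppA_swap nswap_def split: if_splits)
    have "set (b1 @ map (nswap x d) b2) \<inter> Y = (set (b1 @ b2) \<inter> Y) - {x}" using sb2 d xb1 by auto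
    then have cd: "card (set (b1 @ map (nswap x d) b2) \<inter> Y) = n" using Suc.prems x by (simp add: card_Diff_singleton)
    from Suc.IH[OF cd Suc.prems(2) hf2 c1 c2 Suc.prems(6)] show ?thesis
      using fa tgt by (metis (no_types, lifting) converse_rtranclp_into_rtranclp)
  qed
qed

lemma RENPar: "has_frame C P1 b1 \<Psi>1 \<Longrightarrow> has_frame C Q b2 \<Psi>2 \<Longrightarrow>
   set b1 \<inter> (set b2 \<union> suppA C \<Psi>2) = {} \<Longrightarrow> set b2 \<inter> (set b1 \<union> suppA C \<Psi>1) = {} \<Longrightarrow> finite Y \<Longrightarrow>
   \<exists>e1 \<Theta>1 e2 \<Theta>2. has_frame C P1 e1 \<Theta>1 \<and> has_frame C Q e2 \<Theta>2 \<and>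
     set e1 \<inter> (set e2 \<union> suppA C \<Theta>2) = {} \<and> set e2 \<inter> (set e1 \<union> suppA C \<Theta>1) = {} \<and>
     set (e1 @ e2) \<inter> Y = {} \<and> (frame_alpha C)\<^sup>*\<^sup>* (b1 @ b2, acomp C \<Psi>1 \<Psi>2) (e1 @ e2, acomp C \<Theta>1 \<Theta>2)"
  using RENPar_aux[OF refl] by blast

lemma finite_fn[simp]: "finite (fn C P)"
proof (induction P)
  case (PCase cs)
  have "\<forall>x \<in> set cs. finite (case x of (\<phi>, P) \<Rightarrow> suppC C \<phi> \<union> fn C P)"
  proof
    fix x assume xin: "x \<in> set cs"
    obtain \<phi> Q where xq: "x = (\<phi>, Q)" by (cases x)
    have "finite (fn C Q)" using PCase.IH[of x Q] xin xq by simp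
    then show "finite (case x of (\<phi>, P) \<Rightarrow> suppC C \<phi> \<union> fn C P)" using xq by simp
  qed
  then show ?case by simp
qed auto

lemma EX: "finite Y \<Longrightarrow> \<exists>bs \<Psi>. has_frame C P bs \<Psi> \<and> set bs \<inter> Y = {}"
proof (induction P arbitrary: Y)
  case (Res b P)
  then obtain bs \<Psi> where "has_frame C P bs \<Psi>" by blast
  then have "has_frame C (Res b P) (b # bs) \<Psi>" by (rule has_frame.intros)
  from RENF[OF this Res.prems] show ?case by blast
next
  case (Par P Q)
  obtain bQ \<Psi>Q where q: "has_frame C Q bQ \<Psi>Q" "set bQ \<inter> (Y \<union> fn C P) = {}"
    using Par.IH(2)[of "Y \<union> fn C P"] Par.prems by auto
  obtain bP \<Psi>P where p: "has_frame C P bP \<Psi>P" "set bP \<inter> (Y \<union> set bQ \<union> suppA C \<Psi>Q) = {}"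
    using Par.IH(1)[of "Y \<union> set bQ \<union> suppA C \<Psi>Q"] Par.prems by auto
  have "suppA C \<Psi>P - set bP \<subseteq> fn C P" using FS[OF p(1)] .
  then have c2: "set bQ \<inter> (set bP \<union> suppA C \<Psi>P) = {}" using q(2) p(2) by auto
  have c1: "set bP \<inter> (set bQ \<union> suppA C \<Psi>Q) = {}" using p(2) by auto
  have "has_frame C (Par P Q) (bP @ bQ) (acomp C \<Psi>P \<Psi>Q)" by (rule has_frame.intros(7)[OF p(1) q(1) c1 c2])
  moreover have "set (bP @ bQ) \<inter> Y = {}" using p(2) q(2) by auto
  ultimately show ?case by blast
next
  case (Assert \<Psi>)
  show ?case using has_frame.intros(6)[of C \<Psi>] by fastforce
qed (fastforce intro: has_frame.intros)+

lemma EX_obtain: "finite Y \<Longrightarrow> (\<And>bs \<Psi>. has_frame C P bs \<Psi> \<Longrightarrow> set bs \<inter> Y = {} \<Longrightarrow> thesis) \<Longrightarrow> thesis"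
  using EX by blast

lemma CH: "(frame_alpha C)\<^sup>*\<^sup>* F G \<Longrightarrow> \<forall>\<Psi> K B. finite B \<longrightarrow> EN C \<Psi> K B \<inter> (set (fst F) \<union> set (fst G)) = {} \<longrightarrow>
   PropF C \<Psi> K B (snd F) = PropF C \<Psi> K B (snd G)"
proof (induction rule: rtranclp_induct)
  case base then show ?case by simp
next
  case (step G H)
  show ?case
  proof (intro allI impI)
    fix \<Psi> K B assume fB: "finite B" and E: "EN C \<Psi> K B \<inter> (set (fst F) \<union> set (fst H)) = {}"
    have ff: "frame_fn C F = frame_fn C G" "frame_fn C G = frame_fn C H"
      using FA_ffn_star[OF step(1)] FA_ffn[OF step(2)] by auto
    have cnd: "\<forall>z \<in> set (fst G) \<inter> EN C \<Psi> K B. z \<notin> suppA C (snd F) \<and> z \<notin> suppA C (snd H)"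
    proof
      fix z assume z: "z \<in> set (fst G) \<inter> EN C \<Psi> K B"
      then have "z \<notin> frame_fn C G" by (simp add: frame_fn_def)
      moreover have "z \<notin> set (fst F)" "z \<notin> set (fst H)" using z E by auto
      ultimately show "z \<notin> suppA C (snd F) \<and> z \<notin> suppA C (snd H)" using ff by (auto simp: frame_fn_def)
    qed
    obtain \<Psi>' K' B' where r: "finite B'" "EN C \<Psi>' K' B' \<inter> (set (fst G) \<union> (set (fst F) \<union> set (fst H))) = {}"
      "PropF C \<Psi> K B (snd F) = PropF C \<Psi>' K' B' (snd F)" "PropF C \<Psi> K B (snd H) = PropF C \<Psi>' K' B' (snd H)"
      using RNM[OF finite_set finite_UnI[OF finite_set finite_set] fB E cnd] by blast
    have 1: "PropF C \<Psi>' K' B' (snd F) = PropF C \<Psi>' K' B' (snd G)"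
      using step(3) r(1,2) by auto
    have 2: "PropF C \<Psi>' K' B' (snd G) = PropF C \<Psi>' K' B' (snd H)"
      using FA_transfer[OF step(2)] r(1,2) by auto
    show "PropF C \<Psi> K B (snd F) = PropF C \<Psi> K B (snd H)" using r 1 2 by simp
  qed
qed


lemma EN_comp_sub: "EN C (acomp C \<Psi> A) K B \<subseteq> EN C \<Psi> K B \<union> suppA C A"
  using suppA_comp[of \<Psi> A] by (auto simp: EN_def)

lemma UQT: "\<forall>bs \<Psi> bs' \<Psi>' \<Psi>e K B. has_frame C P bs \<Psi> \<longrightarrow> has_frame C P bs' \<Psi>' \<longrightarrow> finite B \<longrightarrow>
   EN C \<Psi>e K B \<inter> (set bs \<union> set bs') = {} \<longrightarrow> PropF C \<Psi>e K B \<Psi> \<longrightarrow> PropF C \<Psi>e K B \<Psi>'"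
proof (induction P)
  case PNil then show ?case by (auto dest!: INV_triv)
next
  case (Outp M N P) then show ?case by (auto dest!: INV_triv)
next
  case (Inp M xs N P) then show ?case by (auto dest!: INV_triv)
next
  case (PCase cs) then show ?case by (auto dest!: INV_triv)
next
  case (Bang P) then show ?case by (auto dest!: INV_triv)
next
  case (Assert \<Phi>) then show ?case by (auto dest!: INV_Assert)
next
  case (Res b P0)
  show ?case
  proof (intro allI impI)
    fix bs \<Psi> bs' \<Psi>' \<Psi>e K B
    assume hF: "has_frame C (Res b P0) bs \<Psi>" and hG: "has_frame C (Res b P0) bs' \<Psi>'" and fB: "finite B"
      and E: "EN C \<Psi>e K B \<inter> (set bs \<union> set bs') = {}" and PF: "PropF C \<Psi>e K B \<Psi>"
    obtain bs0 \<Psi>0 where h0: "has_frame C P0 bs0 \<Psi>0" and c0: "(frame_alpha C)\<^sup>*\<^sup>* (b # bs0, \<Psi>0) (bs, \<Psi>)"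
      using INV_Res[OF hF refl] by blast
    obtain cs0 \<Phi>0 where g0: "has_frame C P0 cs0 \<Phi>0" and d0: "(frame_alpha C)\<^sup>*\<^sup>* (b # cs0, \<Phi>0) (bs', \<Psi>')"
      using INV_Res[OF hG refl] by blast
    have ff1: "frame_fn C (b # bs0, \<Psi>0) = frame_fn C (bs, \<Psi>)" using FA_ffn_star[OF c0] by simp
    have ff2: "frame_fn C (b # cs0, \<Phi>0) = frame_fn C (bs', \<Psi>')" using FA_ffn_star[OF d0] by simp
    have cnd: "\<forall>z \<in> {b} \<inter> EN C \<Psi>e K B. z \<notin> suppA C \<Psi> \<and> z \<notin> suppA C \<Psi>'"
    proof
      fix z assume z: "z \<in> {b} \<inter> EN C \<Psi>e K B"
      then have "z \<notin> set bs" "z \<notin> set bs'" using E by auto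
      moreover have "z \<notin> frame_fn C (bs, \<Psi>)" "z \<notin> frame_fn C (bs', \<Psi>')"
        using z ff1 ff2 by (auto simp: frame_fn_def)
      ultimately show "z \<notin> suppA C \<Psi> \<and> z \<notin> suppA C \<Psi>'" by (auto simp: frame_fn_def)
    qed
    obtain \<Psi>1 K1 B1 where r: "finite B1" "EN C \<Psi>1 K1 B1 \<inter> ({b} \<union> (set bs \<union> set bs')) = {}"
      "PropF C \<Psi>e K B \<Psi> = PropF C \<Psi>1 K1 B1 \<Psi>" "PropF C \<Psi>e K B \<Psi>' = PropF C \<Psi>1 K1 B1 \<Psi>'"
      using RNM[OF finite.insertI[OF finite.emptyI] finite_UnI[OF finite_set finite_set] fB E cnd] by blast
    have fY: "finite (EN C \<Psi>1 K1 B1)" using r(1) by (rule EN_finite)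
    obtain bs1 \<Psi>1' where h1: "has_frame C P0 bs1 \<Psi>1'" "set bs1 \<inter> EN C \<Psi>1 K1 B1 = {}"
      "(frame_alpha C)\<^sup>*\<^sup>* (bs0, \<Psi>0) (bs1, \<Psi>1')" using RENF[OF h0 fY] by blast
    obtain cs1 \<Phi>1 where g1: "has_frame C P0 cs1 \<Phi>1" "set cs1 \<inter> EN C \<Psi>1 K1 B1 = {}"
      "(frame_alpha C)\<^sup>*\<^sup>* (cs0, \<Phi>0) (cs1, \<Phi>1)" using RENF[OF g0 fY] by blast
    have ch1: "(frame_alpha C)\<^sup>*\<^sup>* (b # bs1, \<Psi>1') (bs, \<Psi>)"
      using FA_star_sym[OF FA_prefix_star[OF h1(3), of b]] c0 by simp
    have ch2: "(frame_alpha C)\<^sup>*\<^sup>* (b # cs1, \<Phi>1) (bs', \<Psi>')"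
      using FA_star_sym[OF FA_prefix_star[OF g1(3), of b]] d0 by simp
    have "EN C \<Psi>1 K1 B1 \<inter> (set (fst (b # bs1, \<Psi>1')) \<union> set (fst (bs, \<Psi>))) = {}" using r(2) h1(2) by auto
    then have e1: "PropF C \<Psi>1 K1 B1 \<Psi>1' = PropF C \<Psi>1 K1 B1 \<Psi>"
      using CH[OF ch1, rule_format, of B1 \<Psi>1 K1] r(1) by simp
    have "EN C \<Psi>1 K1 B1 \<inter> (set (fst (b # cs1, \<Phi>1)) \<union> set (fst (bs', \<Psi>'))) = {}" using r(2) g1(2) by auto
    then have e2: "PropF C \<Psi>1 K1 B1 \<Phi>1 = PropF C \<Psi>1 K1 B1 \<Psi>'"
      using CH[OF ch2, rule_format, of B1 \<Psi>1 K1] r(1) by simp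
    have "PropF C \<Psi>1 K1 B1 \<Psi>1' \<longrightarrow> PropF C \<Psi>1 K1 B1 \<Phi>1"
      using Res.IH h1(1,2) g1(1,2) r(1) by blast
    then show "PropF C \<Psi>e K B \<Psi>'" using PF r(3,4) e1 e2 by simp
  qed
next
  case (Par P1 Q)
  show ?case
  proof (intro allI impI)
    fix bs \<Psi> bs' \<Psi>' \<Psi>e K B
    assume hF: "has_frame C (Par P1 Q) bs \<Psi>" and hG: "has_frame C (Par P1 Q) bs' \<Psi>'" and fB: "finite B"
      and E: "EN C \<Psi>e K B \<inter> (set bs \<union> set bs') = {}" and PF: "PropF C \<Psi>e K B \<Psi>"
    obtain b1 \<Psi>1 b2 \<Psi>2 where F: "has_frame C P1 b1 \<Psi>1" "has_frame C Q b2 \<Psi>2"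
      "set b1 \<inter> (set b2 \<union> suppA C \<Psi>2) = {}" "set b2 \<inter> (set b1 \<union> suppA C \<Psi>1) = {}"
      "(frame_alpha C)\<^sup>*\<^sup>* (b1 @ b2, acomp C \<Psi>1 \<Psi>2) (bs, \<Psi>)"
      using INV_Par[OF hF refl] by blast
    obtain c1 \<Phi>1 c2 \<Phi>2 where G: "has_frame C P1 c1 \<Phi>1" "has_frame C Q c2 \<Phi>2"
      "set c1 \<inter> (set c2 \<union> suppA C \<Phi>2) = {}" "set c2 \<inter> (set c1 \<union> suppA C \<Phi>1) = {}"
      "(frame_alpha C)\<^sup>*\<^sup>* (c1 @ c2, acomp C \<Phi>1 \<Phi>2) (bs', \<Psi>')"
      using INV_Par[OF hG refl] by blast
    have fY1: "finite (EN C \<Psi>e K B \<union> fn C P1)" using fB EN_finite by simp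
    obtain e1 \<Theta>1 e2 \<Theta>2 where F': "has_frame C P1 e1 \<Theta>1" "has_frame C Q e2 \<Theta>2"
      "set e1 \<inter> (set e2 \<union> suppA C \<Theta>2) = {}" "set e2 \<inter> (set e1 \<union> suppA C \<Theta>1) = {}"
      "set (e1 @ e2) \<inter> (EN C \<Psi>e K B \<union> fn C P1) = {}"
      "(frame_alpha C)\<^sup>*\<^sup>* (b1 @ b2, acomp C \<Psi>1 \<Psi>2) (e1 @ e2, acomp C \<Theta>1 \<Theta>2)"
      using RENPar[OF F(1-4) fY1] by blast
    have fY2: "finite (EN C \<Psi>e K B \<union> set e1 \<union> set e2 \<union> suppA C \<Theta>1 \<union> suppA C \<Theta>2)" using fB EN_finite by simp
    obtain f1 \<Lambda>1 f2 \<Lambda>2 where G': "has_frame C P1 f1 \<Lambda>1" "has_frame C Q f2 \<Lambda>2"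
      "set f1 \<inter> (set f2 \<union> suppA C \<Lambda>2) = {}" "set f2 \<inter> (set f1 \<union> suppA C \<Lambda>1) = {}"
      "set (f1 @ f2) \<inter> (EN C \<Psi>e K B \<union> set e1 \<union> set e2 \<union> suppA C \<Theta>1 \<union> suppA C \<Theta>2) = {}"
      "(frame_alpha C)\<^sup>*\<^sup>* (c1 @ c2, acomp C \<Phi>1 \<Phi>2) (f1 @ f2, acomp C \<Lambda>1 \<Lambda>2)"
      using RENPar[OF G(1-4) fY2] by blast
    have chF: "(frame_alpha C)\<^sup>*\<^sup>* (e1 @ e2, acomp C \<Theta>1 \<Theta>2) (bs, \<Psi>)"
      using FA_star_sym[OF F'(6)] F(5) by simp
    have chG: "(frame_alpha C)\<^sup>*\<^sup>* (f1 @ f2, acomp C \<Lambda>1 \<Lambda>2) (bs', \<Psi>')"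
      using FA_star_sym[OF G'(6)] G(5) by simp
    have "EN C \<Psi>e K B \<inter> (set (fst (e1 @ e2, acomp C \<Theta>1 \<Theta>2)) \<union> set (fst (bs, \<Psi>))) = {}"
      using E F'(5) by auto
    then have s1: "PropF C \<Psi>e K B (acomp C \<Theta>1 \<Theta>2) = PropF C \<Psi>e K B \<Psi>"
      using CH[OF chF, rule_format, of B \<Psi>e K] fB by simp
    have "EN C \<Psi>e K B \<inter> (set (fst (f1 @ f2, acomp C \<Lambda>1 \<Lambda>2)) \<union> set (fst (bs', \<Psi>'))) = {}"
      using E G'(5) by auto
    then have s5: "PropF C \<Psi>e K B (acomp C \<Lambda>1 \<Lambda>2) = PropF C \<Psi>e K B \<Psi>'"
      using CH[OF chG, rule_format, of B \<Psi>e K] fB by simp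
    have E2: "EN C (acomp C \<Psi>e \<Theta>2) K B \<inter> (set e1 \<union> set f1) = {}"
      using EN_comp_sub[of \<Psi>e \<Theta>2 K B] F'(3,5) G'(5) by auto
    have s2: "PropF C (acomp C \<Psi>e \<Theta>2) K B \<Theta>1 \<longrightarrow> PropF C (acomp C \<Psi>e \<Theta>2) K B \<Lambda>1"
      using Par.IH(1) F'(1) G'(1) fB E2 by blast
    have FSL: "suppA C \<Lambda>1 - set f1 \<subseteq> fn C P1" using FS[OF G'(1)] .
    have a1: "set e2 \<inter> EN C \<Psi>e K B = {}" "set e2 \<inter> fn C P1 = {}" using F'(5) by auto
    have a2: "set f1 \<inter> set e2 = {}" "set f2 \<inter> EN C \<Psi>e K B = {}" using G'(5) by auto
    have a3: "set e2 \<inter> suppA C \<Lambda>1 = {}"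
    proof (rule ccontr)
      assume "set e2 \<inter> suppA C \<Lambda>1 \<noteq> {}"
      then obtain x where x: "x \<in> set e2" "x \<in> suppA C \<Lambda>1" by auto
      then have "x \<notin> set f1" using a2 by auto
      then have "x \<in> fn C P1" using FSL x by auto
      then show False using a1 x by auto
    qed
    have a4: "set f2 \<inter> suppA C \<Lambda>1 = {}" using G'(4) by auto
    have E3: "EN C (acomp C \<Psi>e \<Lambda>1) K B \<inter> (set e2 \<union> set f2) = {}"
      using EN_comp_sub[of \<Psi>e \<Lambda>1 K B] a1 a2 a3 a4 by auto
    have s3: "PropF C (acomp C \<Psi>e \<Lambda>1) K B \<Theta>2 \<longrightarrow> PropF C (acomp C \<Psi>e \<Lambda>1) K B \<Lambda>2"
      using Par.IH(2) F'(2) G'(2) fB E3 by blast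
    have "PropF C \<Psi>e K B (acomp C \<Theta>1 \<Theta>2)" using PF s1 by simp
    then have "PropF C (acomp C \<Psi>e \<Theta>2) K B \<Theta>1"
      using PropF_assoc1[of "\<Psi>e" K B "\<Theta>1" "\<Theta>2"] by simp
    then have "PropF C (acomp C \<Psi>e \<Theta>2) K B \<Lambda>1" using s2 by simp
    then have "PropF C \<Psi>e K B (acomp C \<Lambda>1 \<Theta>2)"
      using PropF_assoc1[of "\<Psi>e" K B "\<Lambda>1" "\<Theta>2"] by simp
    then have "PropF C (acomp C \<Psi>e \<Lambda>1) K B \<Theta>2"
      using PropF_assoc2[of "\<Psi>e" K B "\<Lambda>1" "\<Theta>2"] by simp
    then have "PropF C (acomp C \<Psi>e \<Lambda>1) K B \<Lambda>2" using s3 by simp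
    then have "PropF C \<Psi>e K B (acomp C \<Lambda>1 \<Lambda>2)"
      using PropF_assoc2[of "\<Psi>e" K B "\<Lambda>1" "\<Lambda>2"] by simp
    then show "PropF C \<Psi>e K B \<Psi>'" using s5 by simp
  qed
qed


lemma RENB_aux: "\<And>bs A. card (set bs \<inter> B) = n \<Longrightarrow> has_frame C P bs A \<Longrightarrow> finite B \<Longrightarrow>
   set bs \<inter> (suppA C \<Psi> \<union> suppT C K) = {} \<Longrightarrow> suppT C M \<inter> B = {} \<Longrightarrow>
   entails C (acomp C \<Psi> A) (chan_eq C M K) \<Longrightarrow>
   \<exists>bs' A'. has_frame C P bs' A' \<and> set bs' \<inter> EN C \<Psi> K B = {} \<and> entails C (acomp C \<Psi> A') (chan_eq C M K)"
proof (induction n)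
  case 0
  then have "set bs \<inter> EN C \<Psi> K B = {}" by (auto simp: EN_def)
  then show ?case using 0 by blast
next
  case (Suc n)
  then obtain x where x: "x \<in> set bs \<inter> B" by (metis card.empty empty_iff nat.distinct(1) subsetI subset_antisym)
  have "finite (suppA C A \<union> set bs \<union> EN C \<Psi> K B \<union> suppT C M)" using Suc.prems EN_finite by simp
  then obtain d where d: "d \<notin> suppA C A \<union> set bs \<union> EN C \<Psi> K B \<union> suppT C M" by (rule obtain_fresh)
  have fa: "frame_alpha C (bs, A) (map (nswap x d) bs, permA C x d A)"
    using x d by (intro REN1) auto
  have hf: "has_frame C P (map (nswap x d) bs) (permA C x d A)"
    using has_frame.intros(9)[OF Suc.prems(2) fa] .
  have xs: "x \<notin> suppA C \<Psi>" "x \<notin> suppT C K" "x \<notin> suppT C M" using x Suc.prems(4,5) by auto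
  have ds: "d \<notin> suppA C \<Psi>" "d \<notin> suppT C K" "d \<notin> suppT C M" using d by (auto simp: EN_def)
  have fx: "permA C x d \<Psi> = \<Psi>" "permT C x d K = K" "permT C x d M = M"
    using xs ds by (auto intro: permA_fresh permT_fresh)
  have ent: "entails C (acomp C \<Psi> (permA C x d A)) (chan_eq C M K)"
    using ent_swap[OF Suc.prems(6), of x d] fx by (simp add: eqv_comp eqv_chan)
  have sb: "set (map (nswap x d) bs) = insert d (set bs - {x})" using x d by (simp add: set_swap_in)
  have c4: "set (map (nswap x d) bs) \<inter> (suppA C \<Psi> \<union> suppT C K) = {}" using sb Suc.prems(4) ds by auto
  have "set (map (nswap x d) bs) \<inter> B = (set bs \<inter> B) - {x}" using sb d by (auto simp: EN_def)
  then have "card (set (map (nswap x d) bs) \<inter> B) = n" using Suc.prems x by (simp add: card_Diff_singleton)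
  from Suc.IH[OF this hf Suc.prems(3) c4 Suc.prems(5) ent] show ?case .
qed

lemma SUF: "has_frame C P bs A \<Longrightarrow> set bs \<inter> (suppA C \<Psi> \<union> suppT C K) = {} \<Longrightarrow> finite B \<Longrightarrow>
   suppT C M \<inter> B = {} \<Longrightarrow> entails C (acomp C \<Psi> A) (chan_eq C M K) \<Longrightarrow>
   has_frame C P bs' A' \<Longrightarrow> set bs' \<inter> EN C \<Psi> K B = {} \<Longrightarrow> PropF C \<Psi> K B A'"
proof -
  assume h: "has_frame C P bs A" "set bs \<inter> (suppA C \<Psi> \<union> suppT C K) = {}" "finite B"
    "suppT C M \<inter> B = {}" "entails C (acomp C \<Psi> A) (chan_eq C M K)"
    and h': "has_frame C P bs' A'" "set bs' \<inter> EN C \<Psi> K B = {}"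
  have "\<exists>bs' A'. has_frame C P bs' A' \<and> set bs' \<inter> EN C \<Psi> K B = {} \<and> entails C (acomp C \<Psi> A') (chan_eq C M K)"
    by (rule RENB_aux[OF refl]) (rule h)+
  then obtain bs2 A2 where r: "has_frame C P bs2 A2" "set bs2 \<inter> EN C \<Psi> K B = {}"
    "entails C (acomp C \<Psi> A2) (chan_eq C M K)" by blast
  have "PropF C \<Psi> K B A2" unfolding PropF_def using r(3) h(4) by blast
  moreover have "EN C \<Psi> K B \<inter> (set bs2 \<union> set bs') = {}" using r(2) h'(2) by auto
  ultimately show ?thesis using UQT r(1) h'(1) h(3) by blast
qed

end

fun gwf :: "('t, 'c, 'a) agent \<Rightarrow> bool" where
  "gwf PNil = True"
| "gwf (Outp M N P) = True"
| "gwf (Inp M xs N P) = True"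
| "gwf (PCase cs) = (\<forall>(\<phi>, P)\<in>set cs. guarded P \<and> gwf P)"
| "gwf (Res x P) = gwf P"
| "gwf (Par P Q) = (gwf P \<and> gwf Q)"
| "gwf (Bang P) = (guarded P \<and> gwf P)"
| "gwf (Assert \<Psi>) = True"

lemma wf_gwf: "wf_agent C P \<Longrightarrow> gwf P"
proof (induction P)
  case (PCase cs)
  show ?case
  proof (simp, intro ballI)
    fix x assume xin: "x \<in> set cs"
    obtain \<phi> Q where xq: "x = (\<phi>, Q)" by (cases x)
    have "guarded Q \<and> wf_agent C Q" using PCase.prems xin xq by auto
    then have "gwf Q" using PCase.IH[of x Q] xin xq by simp
    then show "case x of (\<phi>, P) \<Rightarrow> guarded P \<and> gwf P" using xq \<open>guarded Q \<and> wf_agent C Q\<close> by simp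
  qed
qed auto

lemma nswap_comp_self[simp]: "nswap a b \<circ> nswap a b = id"
  by (auto simp: fun_eq_iff)

lemma map_nswap_nswap[simp]: "map (nswap a b) (map (nswap a b) xs) = xs"
  by (induct xs) auto

lemma perm_list_nswap_Cons: "perm_list nswap ((a, b) # ps) n = nswap a b (perm_list nswap ps n)"
  by simp

lemma PL: "length cs = length xs \<Longrightarrow> distinct cs \<Longrightarrow> set cs \<inter> set xs = {} \<Longrightarrow>
  (\<forall>n\<in>set xs. perm_list nswap (zip cs xs) n \<in> set cs) \<and>
  (\<forall>n. n \<notin> set xs \<union> set cs \<longrightarrow> perm_list nswap (zip cs xs) n = n)"
proof (induction cs xs rule: list_induct2)
  case Nil then show ?case by simp
next
  case (Cons c cs x xs)
  then have IH: "\<forall>n\<in>set xs. perm_list nswap (zip cs xs) n \<in> set cs"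
    "\<forall>n. n \<notin> set xs \<union> set cs \<longrightarrow> perm_list nswap (zip cs xs) n = n" by auto
  have cx: "c \<noteq> x" "c \<notin> set cs" "x \<notin> set cs" "c \<notin> set xs" using Cons.prems by auto
  show ?case
  proof (intro conjI ballI allI impI)
    fix n assume n: "n \<in> set (x # xs)"
    show "perm_list nswap (zip (c # cs) (x # xs)) n \<in> set (c # cs)"
    proof (cases "n \<in> set xs")
      case True
      then have m: "perm_list nswap (zip cs xs) n \<in> set cs" using IH by auto
      then have "perm_list nswap (zip cs xs) n \<noteq> c" "perm_list nswap (zip cs xs) n \<noteq> x" using cx by auto
      then show ?thesis using m by simp
    next
      case False
      then have "n = x" using n by simp
      then have "perm_list nswap (zip cs xs) n = x" using IH(2) False cx by auto
      then show ?thesis using \<open>n = x\<close> by simp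
    qed
  next
    fix n assume n: "n \<notin> set (x # xs) \<union> set (c # cs)"
    then have "perm_list nswap (zip cs xs) n = n" using IH(2) by auto
    then show "perm_list nswap (zip (c # cs) (x # xs)) n = n" using n by simp
  qed
qed

lemma PL_key: "length cs = length xs \<Longrightarrow> distinct cs \<Longrightarrow> set cs \<inter> set xs = {} \<Longrightarrow>
  set cs \<inter> (S - set xs) = {} \<Longrightarrow> perm_list nswap (zip cs xs) ` S - set cs = S - set xs"
proof -
  assume a: "length cs = length xs" "distinct cs" "set cs \<inter> set xs = {}" "set cs \<inter> (S - set xs) = {}"
  note pl = PL[OF a(1-3)]
  show ?thesis
  proof
    show "perm_list nswap (zip cs xs) ` S - set cs \<subseteq> S - set xs"
    proof
      fix y assume y: "y \<in> perm_list nswap (zip cs xs) ` S - set cs"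
      then obtain n where n: "n \<in> S" "y = perm_list nswap (zip cs xs) n" by auto
      have "n \<notin> set xs" using pl n y by auto
      moreover then have "n \<notin> set cs" using a(4) n by auto
      ultimately show "y \<in> S - set xs" using pl n by auto
    qed
  next
    show "S - set xs \<subseteq> perm_list nswap (zip cs xs) ` S - set cs"
    proof
      fix n assume n: "n \<in> S - set xs"
      then have nc: "n \<notin> set cs" using a(4) by auto
      then have "perm_list nswap (zip cs xs) n = n" using pl n by auto
      then show "n \<in> perm_list nswap (zip cs xs) ` S - set cs" using n nc by (metis Diff_iff image_eqI)
    qed
  qed
qed

context psi
begin

lemma perm_agent_inv[simp]: "perm_agent C x y (perm_agent C x y P) = P"
proof (induction P)
  case (PCase cs)
  have "map ((\<lambda>(\<phi>, P). (permC C x y \<phi>, perm_agent C x y P)) \<circ> (\<lambda>(\<phi>, P). (permC C x y \<phi>, perm_agent C x y P))) cs = cs"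
  proof (rule map_idI)
    fix z assume zin: "z \<in> set cs"
    obtain \<phi> Q where zq: "z = (\<phi>, Q)" by (cases z)
    have "perm_agent C x y (perm_agent C x y Q) = Q" using PCase.IH[of z Q] zin zq by simp
    then show "((\<lambda>(\<phi>, P). (permC C x y \<phi>, perm_agent C x y P)) \<circ> (\<lambda>(\<phi>, P). (permC C x y \<phi>, perm_agent C x y P))) z = z"
      using zq by simp
  qed
  then show ?case by simp
qed auto

lemma fn_perm: "fn C (perm_agent C x y P) = nswap x y ` fn C P"
proof (induction P)
  case (Inp M xs N P)
  then show ?case by (simp add: suppT_swap image_Un nswap_image_diff[symmetric])
next
  case (PCase cs)
  have "\<And>z. z \<in> set cs \<Longrightarrow> (case (case z of (\<phi>, P) \<Rightarrow> (permC C x y \<phi>, perm_agent C x y P)) of (\<phi>, P) \<Rightarrow> suppC C \<phi> \<union> fn C P)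
     = nswap x y ` (case z of (\<phi>, P) \<Rightarrow> suppC C \<phi> \<union> fn C P)"
  proof -
    fix z assume zin: "z \<in> set cs"
    obtain \<phi> Q where zq: "z = (\<phi>, Q)" by (cases z)
    have "fn C (perm_agent C x y Q) = nswap x y ` fn C Q" using PCase.IH[of z Q] zin zq by simp
    then show "(case (case z of (\<phi>, P) \<Rightarrow> (permC C x y \<phi>, perm_agent C x y P)) of (\<phi>, P) \<Rightarrow> suppC C \<phi> \<union> fn C P)
     = nswap x y ` (case z of (\<phi>, P) \<Rightarrow> suppC C \<phi> \<union> fn C P)" using zq by (simp add: suppC_swap image_Un)
  qed
  then show ?case by (simp add: image_UN)
next
  case (Res z P)
  then show ?case by (simp add: nswap_image_diff[of x y _ "{z}", simplified])
qed (simp_all add: suppT_swap suppA_swap image_Un)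

lemma guarded_perm[simp]: "guarded (perm_agent C x y P) = guarded P"
proof (induction P)
  case (PCase cs)
  then show ?case by (force simp: split_beta)
qed auto

lemma gwf_perm[simp]: "gwf (perm_agent C x y P) = gwf P"
proof (induction P)
  case (PCase cs)
  then show ?case by (force simp: split_beta)
qed auto

lemma suppT_perm_list: "suppT C (perm_list (permT C) ps N) = perm_list nswap ps ` suppT C N"
proof (induction ps)
  case (Cons ab ps) then show ?case by (cases ab) (simp add: suppT_swap image_image)
qed simp

lemma fn_perm_list: "fn C (perm_list (perm_agent C) ps P) = perm_list nswap ps ` fn C P"
proof (induction ps)
  case (Cons ab ps) then show ?case by (cases ab) (simp add: fn_perm image_image)
qed simp

lemma guarded_perm_list[simp]: "guarded (perm_list (perm_agent C) ps P) = guarded P"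
proof (induction ps)
  case (Cons ab ps) then show ?case by (cases ab) (simp add: )
qed simp

lemma gwf_perm_list[simp]: "gwf (perm_list (perm_agent C) ps P) = gwf P"
proof (induction ps)
  case (Cons ab ps) then show ?case by (cases ab) (simp add: )
qed simp


lemma H1: "list_all2 (\<lambda>(\<phi>, P) (\<phi>', Q). \<phi> = \<phi>' \<and> R P Q \<and> fn C P = fn C Q) cs ds \<Longrightarrow>
  fn C (PCase cs) = fn C (PCase ds)"
  by (induction rule: list_all2_induct) (auto simp: split_beta)

lemma H2: "list_all2 (\<lambda>(\<phi>, P) (\<phi>', Q). \<phi> = \<phi>' \<and> R P Q \<and> (guarded P = guarded Q \<and> gwf P = gwf Q)) cs ds \<Longrightarrow>
  guarded (PCase cs) = guarded (PCase ds) \<and> gwf (PCase cs) = gwf (PCase ds)"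
  by (induction rule: list_all2_induct) (auto simp: split_beta)

lemma alpha_fn: "alpha C P Q \<Longrightarrow> fn C P = fn C Q"
proof (induction rule: alpha.induct)
  case (3 ys xs cs M N P N' Q)
  let ?S = "suppT C N \<union> fn C P" and ?S' = "suppT C N' \<union> fn C Q"
  have img: "perm_list nswap (zip cs xs) ` ?S = perm_list nswap (zip cs ys) ` ?S'"
    using 3(5,7) by (metis image_Un suppT_perm_list fn_perm_list)
  have k1: "perm_list nswap (zip cs xs) ` ?S - set cs = ?S - set xs"
    using 3(1-4) by (intro PL_key) auto
  have k2: "perm_list nswap (zip cs ys) ` ?S' - set cs = ?S' - set ys"
    using 3(1-4) by (intro PL_key) auto
  have "?S - set xs = ?S' - set ys" using img k1 k2 by simp
  then show ?case by simp
next
  case (4 cs ds)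
  then show ?case by (rule H1)
next
  case (5 c a b P Q)
  have "nswap a c ` fn C P = nswap b c ` fn C Q" using 5(3) by (simp add: fn_perm)
  moreover have "c \<noteq> a" "c \<noteq> b" "c \<notin> fn C P - {a}" "c \<notin> fn C Q - {b}" using 5(1) by auto
  ultimately have "fn C P - {a} = fn C Q - {b}" by (rule swap_set_eq)
  then show ?case by simp
qed simp_all

lemma alpha_g: "alpha C P Q \<Longrightarrow> guarded P = guarded Q \<and> gwf P = gwf Q"
proof (induction rule: alpha.induct)
  case (4 cs ds)
  then show ?case by (rule H2)
next
  case (5 c a b P Q)
  then show ?case by simp
qed simp_all

lemma AF: "alpha C P Q \<Longrightarrow> has_frame C Q bs \<Psi> \<Longrightarrow> has_frame C P bs \<Psi>"
proof (induction arbitrary: bs \<Psi> rule: alpha.induct)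
  case 1 then show ?case using INV_triv[OF 1] by (auto intro: has_frame.intros)
next
  case (2 P Q M N) then show ?case using INV_triv[OF 2(3)] by (auto intro: has_frame.intros)
next
  case (3 ys xs cs M N P N' Q) then show ?case using INV_triv[OF 3(8)] by (auto intro: has_frame.intros)
next
  case (4 cs ds) then show ?case using INV_triv[OF 4(2)] by (auto intro: has_frame.intros)
next
  case (5 c a b P Q)
  obtain bs0 \<Psi>0 where h0: "has_frame C Q bs0 \<Psi>0" and ch: "(frame_alpha C)\<^sup>*\<^sup>* (b # bs0, \<Psi>0) (bs, \<Psi>)"
    using INV_Res[OF 5(4) refl] by blast
  have "has_frame C (perm_agent C b c Q) (map (nswap b c) bs0) (permA C b c \<Psi>0)" using HF_eqv[OF h0] .
  then have "has_frame C (perm_agent C a c P) (map (nswap b c) bs0) (permA C b c \<Psi>0)" using 5(3) by blast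
  from HF_eqv[OF this, of a c] have "has_frame C P (map (nswap a c) (map (nswap b c) bs0)) (permA C a c (permA C b c \<Psi>0))"
    by simp
  then have hF1: "has_frame C (Res a P) (a # map (nswap a c) (map (nswap b c) bs0)) (permA C a c (permA C b c \<Psi>0))"
    by (rule has_frame.intros(8))
  have hR: "has_frame C (Res b Q) (b # bs0) \<Psi>0" using h0 by (rule has_frame.intros(8))
  have s1: "frame_fn C (a # map (nswap a c) (map (nswap b c) bs0), permA C a c (permA C b c \<Psi>0)) \<subseteq> fn C (Res a P)"
    using FS[OF hF1] by (simp add: frame_fn_def)
  have s2: "frame_fn C (b # bs0, \<Psi>0) \<subseteq> fn C (Res b Q)"
    using FS[OF hR] by (simp add: frame_fn_def)
  have side: "c \<notin> {a, b} \<union> frame_fn C (a # map (nswap a c) (map (nswap b c) bs0), permA C a c (permA C b c \<Psi>0))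
     \<union> frame_fn C (b # bs0, \<Psi>0)" using 5(1) s1 s2 by blast
  have inner: "frame_alpha C (map (nswap a c) (map (nswap a c) (map (nswap b c) bs0)), permA C a c (permA C a c (permA C b c \<Psi>0)))
     (map (nswap b c) bs0, permA C b c \<Psi>0)"
    using FA_refl by (simp only: map_nswap_nswap permA_inv)
  have "frame_alpha C (a # map (nswap a c) (map (nswap b c) bs0), permA C a c (permA C b c \<Psi>0)) (b # bs0, \<Psi>0)"
    by (rule frame_alpha.intros(2)[OF side inner])
  then have "has_frame C (Res a P) (b # bs0) \<Psi>0" by (rule has_frame.intros(9)[OF hF1])
  then show ?case using HF_star[OF ch] by simp
next
  case (6 P P' Q Q')
  obtain b1 \<Psi>1 b2 \<Psi>2 where F: "has_frame C P' b1 \<Psi>1" "has_frame C Q' b2 \<Psi>2"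
    "set b1 \<inter> (set b2 \<union> suppA C \<Psi>2) = {}" "set b2 \<inter> (set b1 \<union> suppA C \<Psi>1) = {}"
    "(frame_alpha C)\<^sup>*\<^sup>* (b1 @ b2, acomp C \<Psi>1 \<Psi>2) (bs, \<Psi>)"
    using INV_Par[OF 6(5) refl] by blast
  have "has_frame C (Par P Q) (b1 @ b2) (acomp C \<Psi>1 \<Psi>2)"
    using has_frame.intros(7)[OF "6.IH"(1)[OF F(1)] "6.IH"(2)[OF F(2)] F(3) F(4)] .
  then show ?case using HF_star[OF F(5)] by simp
next
  case (7 P Q) then show ?case using INV_triv[OF 7(3)] by (auto intro: has_frame.intros)
next
  case (8 \<Psi>) then show ?case by simp
qed


lemma names_subj: "\<alpha> \<noteq> Tau \<Longrightarrow> suppT C (subj \<alpha>) \<subseteq> names_act C \<alpha>"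
  by (cases \<alpha>) auto

lemma res_alpha_subj: "res_alpha C (\<alpha>1, P1) (\<alpha>, P') \<Longrightarrow> \<alpha> \<noteq> Tau \<Longrightarrow> \<alpha>1 \<noteq> Tau \<and> subj \<alpha>1 = subj \<alpha>"
  by (cases \<alpha>1; cases \<alpha>) auto

lemma PropF_env_ae: "assert_equiv C X X' \<Longrightarrow> PropF C X K B A \<Longrightarrow> PropF C X' K B A"
  unfolding PropF_def by (meson ae_congr ae_ent)

lemma SUF2: "has_frame C P bs A \<Longrightarrow> set bs \<inter> (suppA C \<Psi> \<union> suppT C K) = {} \<Longrightarrow> finite B \<Longrightarrow>
   PropF C \<Psi> K B A \<Longrightarrow> has_frame C P bs' A' \<Longrightarrow> set bs' \<inter> EN C \<Psi> K B = {} \<Longrightarrow> PropF C \<Psi> K B A'"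
  unfolding PropF_def[of C \<Psi> K B A] using SUF by blast

lemma RES_CASE:
  assumes IH: "\<And>B bs A. finite B \<Longrightarrow> B \<inter> fn C P0 = {} \<Longrightarrow> has_frame C P0 bs A \<Longrightarrow>
      set bs \<inter> EN C \<Psi> K B = {} \<Longrightarrow> PropF C \<Psi> K B A"
    and bP: "b \<notin> suppA C \<Psi>" and bK: "b \<notin> suppT C K" and fB: "finite B"
    and BP: "B \<inter> fn C (Res b P0) = {}" and hf: "has_frame C (Res b P0) bs A"
    and E: "set bs \<inter> EN C \<Psi> K B = {}"
  shows "PropF C \<Psi> K B A"
proof -
  let ?B0 = "B - {b}"
  have "finite (EN C \<Psi> K B \<union> {b})" using fB EN_finite by simp
  then obtain bs0 A0 where h0: "has_frame C P0 bs0 A0" "set bs0 \<inter> (EN C \<Psi> K B \<union> {b}) = {}"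
    by (rule EX_obtain)
  have B0: "?B0 \<inter> fn C P0 = {}" using BP by auto
  have "set bs0 \<inter> EN C \<Psi> K ?B0 = {}" using h0(2) by (auto simp: EN_def)
  then have "PropF C \<Psi> K ?B0 A0" using IH[OF _ B0 h0(1)] fB by simp
  then obtain M where M: "suppT C M \<inter> ?B0 = {}" "entails C (acomp C \<Psi> A0) (chan_eq C M K)"
    unfolding PropF_def by blast
  have "finite (EN C \<Psi> K B \<union> {b} \<union> set bs0 \<union> suppA C A0 \<union> suppT C M)" using fB EN_finite by simp
  then obtain b' where b': "b' \<notin> EN C \<Psi> K B \<union> {b} \<union> set bs0 \<union> suppA C A0 \<union> suppT C M" by (rule obtain_fresh)
  have hR: "has_frame C (Res b P0) (b # bs0) A0" using h0(1) by (rule has_frame.intros(8))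
  have fa: "frame_alpha C (b # bs0, A0) (map (nswap b b') (b # bs0), permA C b b' A0)"
    using b' by (intro REN1) auto
  have hR': "has_frame C (Res b P0) (map (nswap b b') (b # bs0)) (permA C b b' A0)"
    using has_frame.intros(9)[OF hR fa] .
  have bb0: "b \<notin> set bs0" using h0(2) by auto
  have "map (nswap b b') bs0 = bs0" using bb0 b' by (intro map_idI nswap_same) auto
  then have sm: "set (map (nswap b b') (b # bs0)) = insert b' (set bs0)" by simp
  have fx: "permA C b b' \<Psi> = \<Psi>" "permT C b b' K = K"
    using bP bK b' by (auto simp: EN_def intro: permA_fresh permT_fresh)
  have ent: "entails C (acomp C \<Psi> (permA C b b' A0)) (chan_eq C (permT C b b' M) K)"
    using ent_swap[OF M(2), of b b'] fx by (simp add: eqv_comp eqv_chan)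
  have Mf: "suppT C (permT C b b' M) \<inter> B = {}"
  proof (rule ccontr)
    assume "suppT C (permT C b b' M) \<inter> B \<noteq> {}"
    then obtain y where y1: "y \<in> suppT C (permT C b b' M)" "y \<in> B" by blast
    then have y: "y \<in> B" "nswap b b' y \<in> suppT C M" by (simp_all add: suppT_swap mem_nswap_image)
    have yb': "y \<noteq> b'" using y b' by (auto simp: EN_def)
    show False
    proof (cases "y = b")
      case True then show False using y b' by simp
    next
      case False then show False using y yb' M(1) by auto
    qed
  qed
  have c: "set (map (nswap b b') (b # bs0)) \<inter> (suppA C \<Psi> \<union> suppT C K) = {}"
    using sm b' h0(2) by (auto simp: EN_def)
  show ?thesis using SUF[OF hR' c fB Mf ent hf E] .
qed

lemma MAIN: "transition C \<Psi> P \<alpha> P' \<Longrightarrow> \<alpha> \<noteq> Tau \<Longrightarrow> gwf P \<Longrightarrow>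
  (\<forall>B bs A. finite B \<longrightarrow> B \<inter> fn C P = {} \<longrightarrow> has_frame C P bs A \<longrightarrow>
     set bs \<inter> EN C \<Psi> (subj \<alpha>) B = {} \<longrightarrow> PropF C \<Psi> (subj \<alpha>) B A)"
proof (induction rule: transition.induct)
  case (In \<Psi> M K Ls ys P P' N)
  show ?case
  proof (intro allI impI)
    fix B bs A assume fB: "finite B" and BP: "B \<inter> fn C (Inp M ys N P) = {}"
      and hf: "has_frame C (Inp M ys N P) bs A" and E: "set bs \<inter> EN C \<Psi> (subj (InAct K (substT C N ys Ls))) B = {}"
    have m: "suppT C M \<inter> B = {}" using BP by auto
    have ent: "entails C (acomp C \<Psi> (aunit C)) (chan_eq C M K)" using In(1) ae_ent[OF ae_sym[OF ae_unit]] by blast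
    have h0: "has_frame C (Inp M ys N P) [] (aunit C)" by (rule has_frame.intros)
    show "PropF C \<Psi> (subj (InAct K (substT C N ys Ls))) B A"
      using SUF[OF h0 _ fB m ent hf] E by simp
  qed
next
  case (Out \<Psi> M K N P)
  show ?case
  proof (intro allI impI)
    fix B bs A assume fB: "finite B" and BP: "B \<inter> fn C (Outp M N P) = {}"
      and hf: "has_frame C (Outp M N P) bs A" and E: "set bs \<inter> EN C \<Psi> (subj (OutAct K [] N)) B = {}"
    have m: "suppT C M \<inter> B = {}" using BP by auto
    have ent: "entails C (acomp C \<Psi> (aunit C)) (chan_eq C M K)" using Out(1) ae_ent[OF ae_sym[OF ae_unit]] by blast
    have h0: "has_frame C (Outp M N P) [] (aunit C)" by (rule has_frame.intros)
    show "PropF C \<Psi> (subj (OutAct K [] N)) B A"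
      using SUF[OF h0 _ fB m ent hf] E by simp
  qed
next
  case (Case \<phi> P cs \<Psi> \<alpha> P')
  have g: "guarded P" "gwf P" using Case.prems(2) Case(1) by auto
  show ?case
  proof (intro allI impI)
    fix B bs A assume fB: "finite B" and BP: "B \<inter> fn C (PCase cs) = {}"
      and hf: "has_frame C (PCase cs) bs A" and E: "set bs \<inter> EN C \<Psi> (subj \<alpha>) B = {}"
    have A: "bs = [] \<and> A = aunit C" using INV_triv[OF hf] by simp
    have "finite (EN C \<Psi> (subj \<alpha>) B)" using fB by (rule EN_finite)
    then obtain bs0 A0 where h0: "has_frame C P bs0 A0" "set bs0 \<inter> EN C \<Psi> (subj \<alpha>) B = {}" by (rule EX_obtain)
    have BP0: "B \<inter> fn C P = {}" using BP Case(1) by auto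
    have "PropF C \<Psi> (subj \<alpha>) B A0" using Case.IH Case.prems g fB BP0 h0 by blast
    then have "PropF C \<Psi> (subj \<alpha>) B (aunit C)" using PropF_ae G1[OF h0(1) g(1)] by blast
    then show "PropF C \<Psi> (subj \<alpha>) B A" using A by simp
  qed
next
  case Com1 then show ?case by simp
next
  case Com2 then show ?case by simp
next
  case (Par1 Q bQ \<Psi>Q \<Psi> P \<alpha> P')
  show ?case
  proof (intro allI impI)
    fix B bs A assume fB: "finite B" and BP: "B \<inter> fn C (Par P Q) = {}"
      and hf: "has_frame C (Par P Q) bs A" and E: "set bs \<inter> EN C \<Psi> (subj \<alpha>) B = {}"
    let ?K = "subj \<alpha>"
    have nK: "suppT C ?K \<subseteq> names_act C \<alpha>" using names_subj Par1.prems(1) by blast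
    let ?Y = "suppA C \<Psi> \<union> suppA C \<Psi>Q \<union> suppT C ?K \<union> B \<union> set bQ \<union> fn C Q"
    have "finite ?Y" using fB by simp
    then obtain b1 \<Psi>1 where h1: "has_frame C P b1 \<Psi>1" "set b1 \<inter> ?Y = {}" by (rule EX_obtain)
    have g: "gwf P" using Par1.prems(2) by simp
    have BP1: "B \<inter> fn C P = {}" using BP by auto
    have "set b1 \<inter> EN C (acomp C \<Psi>Q \<Psi>) ?K B = {}"
      using EN_comp_sub[of \<Psi>Q \<Psi> ?K B] h1(2) by (auto simp: EN_def)
    then have PF: "PropF C (acomp C \<Psi>Q \<Psi>) ?K B \<Psi>1" using Par1.IH Par1.prems(1) g fB BP1 h1(1) by blast
    then have "PropF C (acomp C \<Psi> \<Psi>Q) ?K B \<Psi>1" using PropF_env_ae[OF ae_comm] by blast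
    then have PF2: "PropF C \<Psi> ?K B (acomp C \<Psi>1 \<Psi>Q)" by (simp add: PropF_assoc1)
    have FS1: "suppA C \<Psi>1 - set b1 \<subseteq> fn C P" using FS[OF h1(1)] .
    have c1: "set b1 \<inter> (set bQ \<union> suppA C \<Psi>Q) = {}" using h1(2) by auto
    have c2: "set bQ \<inter> (set b1 \<union> suppA C \<Psi>1) = {}" using Par1(2) h1(2) FS1 by auto
    have hP: "has_frame C (Par P Q) (b1 @ bQ) (acomp C \<Psi>1 \<Psi>Q)" by (rule has_frame.intros(7)[OF h1(1) Par1(1) c1 c2])
    have c3: "set (b1 @ bQ) \<inter> (suppA C \<Psi> \<union> suppT C ?K) = {}" using h1(2) Par1(2) nK by auto
    show "PropF C \<Psi> ?K B A" by (rule SUF2[OF hP c3 fB PF2 hf E])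
  qed
next
  case (Par2 P bP \<Psi>P \<Psi> Q \<alpha> Q')
  show ?case
  proof (intro allI impI)
    fix B bs A assume fB: "finite B" and BP: "B \<inter> fn C (Par P Q) = {}"
      and hf: "has_frame C (Par P Q) bs A" and E: "set bs \<inter> EN C \<Psi> (subj \<alpha>) B = {}"
    let ?K = "subj \<alpha>"
    have nK: "suppT C ?K \<subseteq> names_act C \<alpha>" using names_subj Par2.prems(1) by blast
    let ?Y = "suppA C \<Psi> \<union> suppA C \<Psi>P \<union> suppT C ?K \<union> B \<union> set bP \<union> fn C P"
    have "finite ?Y" using fB by simp
    then obtain b2 \<Psi>2 where h2: "has_frame C Q b2 \<Psi>2" "set b2 \<inter> ?Y = {}" by (rule EX_obtain)
    have g: "gwf Q" using Par2.prems(2) by simp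
    have BP2: "B \<inter> fn C Q = {}" using BP by auto
    have "set b2 \<inter> EN C (acomp C \<Psi>P \<Psi>) ?K B = {}"
      using EN_comp_sub[of \<Psi>P \<Psi> ?K B] h2(2) by (auto simp: EN_def)
    then have PF: "PropF C (acomp C \<Psi>P \<Psi>) ?K B \<Psi>2" using Par2.IH Par2.prems(1) g fB BP2 h2(1) by blast
    then have "PropF C (acomp C \<Psi> \<Psi>P) ?K B \<Psi>2" using PropF_env_ae[OF ae_comm] by blast
    then have PF2: "PropF C \<Psi> ?K B (acomp C \<Psi>P \<Psi>2)" by (simp add: PropF_assoc2)
    have FS2: "suppA C \<Psi>2 - set b2 \<subseteq> fn C Q" using FS[OF h2(1)] .
    have c2: "set b2 \<inter> (set bP \<union> suppA C \<Psi>P) = {}" using h2(2) by auto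
    have c1: "set bP \<inter> (set b2 \<union> suppA C \<Psi>2) = {}" using Par2(2) h2(2) FS2 by auto
    have hP: "has_frame C (Par P Q) (bP @ b2) (acomp C \<Psi>P \<Psi>2)" by (rule has_frame.intros(7)[OF Par2(1) h2(1) c1 c2])
    have c3: "set (bP @ b2) \<inter> (suppA C \<Psi> \<union> suppT C ?K) = {}" using h2(2) Par2(2) nK by auto
    show "PropF C \<Psi> ?K B A" by (rule SUF2[OF hP c3 fB PF2 hf E])
  qed
next
  case (Scope \<Psi> P \<alpha> P' b)
  have nK: "suppT C (subj \<alpha>) \<subseteq> names_act C \<alpha>" using names_subj Scope.prems(1) by blast
  have IH: "\<And>B bs A. finite B \<Longrightarrow> B \<inter> fn C P = {} \<Longrightarrow> has_frame C P bs A \<Longrightarrow>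
      set bs \<inter> EN C \<Psi> (subj \<alpha>) B = {} \<Longrightarrow> PropF C \<Psi> (subj \<alpha>) B A"
    using Scope.IH Scope.prems by simp
  show ?case
  proof (intro allI impI)
    fix B bs A assume a: "finite B" "B \<inter> fn C (Res b P) = {}" "has_frame C (Res b P) bs A"
      "set bs \<inter> EN C \<Psi> (subj \<alpha>) B = {}"
    have bfr: "b \<notin> names_act C \<alpha> \<union> suppA C \<Psi>" by fact
    then have b1: "b \<notin> suppA C \<Psi>" "b \<notin> suppT C (subj \<alpha>)" using nK by auto
    show "PropF C \<Psi> (subj \<alpha>) B A" by (rule RES_CASE[OF IH b1 a])
  qed
next
  case (Open \<Psi> P M as1 as2 N P' b)
  have IH: "\<And>B bs A. finite B \<Longrightarrow> B \<inter> fn C P = {} \<Longrightarrow> has_frame C P bs A \<Longrightarrow>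
      set bs \<inter> EN C \<Psi> M B = {} \<Longrightarrow> PropF C \<Psi> M B A"
    using Open.IH Open.prems by simp
  show ?case
  proof (intro allI impI)
    fix B bs A assume a: "finite B" "B \<inter> fn C (Res b P) = {}" "has_frame C (Res b P) bs A"
      "set bs \<inter> EN C \<Psi> (subj (OutAct M (as1 @ b # as2) N)) B = {}"
    have bfr: "b \<notin> set as1 \<union> set as2 \<union> suppA C \<Psi> \<union> suppT C M" by fact
    then have b1: "b \<notin> suppA C \<Psi>" "b \<notin> suppT C M" by auto
    have a4: "set bs \<inter> EN C \<Psi> M B = {}" using a(4) by simp
    show "PropF C \<Psi> (subj (OutAct M (as1 @ b # as2) N)) B A"
      using RES_CASE[OF IH b1 a(1-3) a4] by simp
  qed
next
  case (Rep \<Psi> P \<alpha> P')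
  have g: "guarded P" "gwf P" using Rep.prems(2) by auto
  show ?case
  proof (intro allI impI)
    fix B bs A assume fB: "finite B" and BP: "B \<inter> fn C (Bang P) = {}"
      and hf: "has_frame C (Bang P) bs A" and E: "set bs \<inter> EN C \<Psi> (subj \<alpha>) B = {}"
    have A: "bs = [] \<and> A = aunit C" using INV_triv[OF hf] by simp
    have "finite (EN C \<Psi> (subj \<alpha>) B)" using fB by (rule EN_finite)
    then obtain bs0 A0 where h0: "has_frame C (Par P (Bang P)) bs0 A0" "set bs0 \<inter> EN C \<Psi> (subj \<alpha>) B = {}" by (rule EX_obtain)
    have BP0: "B \<inter> fn C (Par P (Bang P)) = {}" using BP by auto
    have g2: "gwf (Par P (Bang P))" "guarded (Par P (Bang P))" using g by auto
    have "PropF C \<Psi> (subj \<alpha>) B A0" using Rep.IH Rep.prems(1) g2(1) fB BP0 h0 by blast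
    then have "PropF C \<Psi> (subj \<alpha>) B (aunit C)" using PropF_ae G1[OF h0(1) g2(2)] by blast
    then show "PropF C \<Psi> (subj \<alpha>) B A" using A by simp
  qed
next
  case (Alpha P P1 \<Psi> \<alpha>1 P1' \<alpha> P')
  have ra: "\<alpha>1 \<noteq> Tau" "subj \<alpha>1 = subj \<alpha>" using res_alpha_subj[OF Alpha(3) Alpha.prems(1)] by auto
  have g: "gwf P1" using alpha_g[OF Alpha(1)] Alpha.prems(2) by simp
  have fe: "fn C P = fn C P1" using alpha_fn[OF Alpha(1)] .
  show ?case
  proof (intro allI impI)
    fix B bs A assume fB: "finite B" and BP: "B \<inter> fn C P = {}"
      and hf: "has_frame C P bs A" and E: "set bs \<inter> EN C \<Psi> (subj \<alpha>) B = {}"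
    have "finite (EN C \<Psi> (subj \<alpha>) B)" using fB by (rule EN_finite)
    then obtain bs1 A1 where h1: "has_frame C P1 bs1 A1" "set bs1 \<inter> EN C \<Psi> (subj \<alpha>) B = {}" by (rule EX_obtain)
    have "PropF C \<Psi> (subj \<alpha>1) B A1" using Alpha.IH ra g fB BP fe h1 by simp
    then have PF: "PropF C \<Psi> (subj \<alpha>) B A1" using ra by simp
    have hP: "has_frame C P bs1 A1" using AF[OF Alpha(1) h1(1)] .
    have "EN C \<Psi> (subj \<alpha>) B \<inter> (set bs1 \<union> set bs) = {}" using h1(2) E by auto
    then show "PropF C \<Psi> (subj \<alpha>) B A" using UQT hP hf fB PF by blast
  qed
qed

end

theorem mainTheorem5:
  fixes C :: "('t, 'c, 'a) psi"
  assumes "psi_calculus C"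
    and "wf_agent C P"
    and "finite B" and "B \<inter> fn C P = {}"
    and "transition C \<Psi> P \<alpha> P'" and "\<alpha> \<noteq> Tau"
    and "has_frame C P bP \<Psi>P"
    and "set bP \<inter> (suppA C \<Psi> \<union> fn C P \<union> suppT C (subj \<alpha>) \<union> B) = {}"
  shows "\<exists>M. suppT C M \<inter> B = {} \<and> entails C (acomp C \<Psi> \<Psi>P) (chan_eq C M (subj \<alpha>))"
proof -
  interpret psi C using assms(1) by unfold_locales
  have "set bP \<inter> EN C \<Psi> (subj \<alpha>) B = {}" using assms(8) by (auto simp: EN_def)
  then have "PropF C \<Psi> (subj \<alpha>) B \<Psi>P"
    using MAIN[OF assms(5,6) wf_gwf[OF assms(2)]] assms(3,4,7) by blast
  then show ?thesis by (simp add: PropF_def)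
qed

end
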